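(* In the setting and notation described in the context (GKSM iteration), assume $K<+\infty$ and $0<\alpha_{\min}\le\alpha_k\le\alpha_{\max}<\frac{2\underline{\eta}}{\underline{\eta}+L}$ for all $k$; put $\upsilon:=\frac{\underline{\eta}}{\alpha_{\max}}-\frac{\underline{\eta}+L}{2}>0$. Then: (i) $\|\mathbf x_{k+1}-\mathbf x_k\|\to0$, and every cluster point $\hat{\mathbf x}$ of $\{\mathbf x_k\}$ is a critical point of $\min_{\mathbf x\in\mathcal C}F(\mathbf x)$, i.e. $\mathbf 0\in\nabla F(\hat{\mathbf x})+\partial\iota_{\mathcal C}(\hat{\mathbf x})$. (ii) Suppose moreover that $\mathbf x_k\to\mathbf x^*$ and that $F_{\mathcal C}$ satisfies the KL inequality at $\bar{\mathbf x}=\mathbf x^*$ with desingularizing function $\varphi(s)=c\,s^{1-t}$ ($c>0$, $t\in[0,1)$), constant $\eta>0$ and a neighborhood $\mathcal U$ of $\mathbf x^*$ containing a closed ball $\mathcal B(\mathbf x^*,\Lambda)$, $\Lambda>0$. Set $F^*:=F(\mathbf x^* )$. Then there exists $K'>K+1$ such that $\mathbf x_k\in\mathcal B(\mathbf x^*,\Lambda)$ and $|F_{\mathcal C}(\mathbf x_k)-F^*|<\eta$ for all $k\ge K'$, and, with $F_{K'}:=F(\mathbf x_{K'})-F^*$ and $\gamma:=\sup_k\frac{[c(L\alpha_k+\overline{\eta})]^2}{\upsilon(1-t)^2\alpha_k^2}$, the following hold for $k\ge K'$: 1. if $t=0$: $F(\mathbf x_{k+1})-F^*\le\big(F_{K'}-\tfrac{1}{\gamma}(k-K'+1)\big)_+$,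 where $(a)_+=\max(a,0)$; 2. if $t\in(0,\tfrac12]$: $F(\mathbf x_{k+1})-F^*\le\Big(1-\frac{F_{K'}^{2t-1}}{F_{K'}^{2t-1}+\gamma}\Big)^{k-K'+1}F_{K'}$; 3. if $t\in(\tfrac12,1)$: for every $\sigma\in(0,1)$ and all sufficiently large $k$, $F(\mathbf x_{k+1})-F^*\le\big(F_{K'}^{1-2t}+q\,(k-K'+1)\big)^{\frac{1}{1-2t}}$ with $q=(t-\tfrac12)(1-\sigma)^{2t}/\gamma$.
   Context: Setting. Identify $\mathbb C^N$ with $\mathbb R^{2N}$ equipped with the real inner product $\mathrm{Re}\langle\mathbf u,\mathbf v\rangle$, where $\langle\mathbf u,\mathbf v\rangle=\mathbf u^{H}\mathbf v$ ($^H$ = conjugate transpose); all gradients are taken with respect to this inner product. Let $\mathbf A\in\mathbb C^{m\times N}$, $\mathbf y\in\mathbb C^m$ with $\mathbf A^H\mathbf y\neq\mathbf 0$, and $h(\mathbf x)=\frac12\|\mathbf A\mathbf x-\mathbf y\|_2^2$ (so $\nabla h(\mathbf x)=\mathbf A^H(\mathbf A\mathbf x-\mathbf y)$). Let $f:\mathbb C^N\to\mathbb R$ be differentiable and bounded below, with $\nabla f$ $L$-Lipschitz ($L>0$): $\|\nabla f(\mathbf x_1)-\nabla f(\mathbf x_2)\|\le L\|\mathbf x_1-\mathbf x_2\|$. Let $\mathcal C\subseteq\mathbb C^N$ be nonempty, closed and convex, $\iota_{\mathcal C}$ its indicator function ($0$ on $\mathcal C$, $+\infty$ outside), $F=h+f$,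 $F_{\mathcal C}=F+\iota_{\mathcal C}$, and $\|\mathbf x\|_{\mathbf M}^2=\mathbf x^H\mathbf M\mathbf x$. GKSM iteration. Fix $K\in\{1,2,\dots\}\cup\{+\infty\}$, stepsizes $\alpha_k>0$, and Hermitian matrices $\mathbf B_k\in\mathbb C^{N\times N}$ with $\underline{\eta}\,\mathbf I\preceq\mathbf B_k\preceq\overline{\eta}\,\mathbf I$ for all $k$, where $0<\underline{\eta}\le\overline{\eta}<\infty$ (in the paper $\mathbf B_k$ is produced by a modified self-scaling Hermitian rank-one quasi-Newton rule whose output satisfies these bounds). Let $\mathbf V_1=\mathbf A^H\mathbf y/\|\mathbf A^H\mathbf y\|$ and choose $\mathbf x_1\in\mathcal C\cap\operatorname{range}(\mathbf V_1)$. For $k=1,2,\dots$: define $\bar F_k(\mathbf x)=h(\mathbf x)+\mathrm{Re}\langle\nabla f(\mathbf x_k),\mathbf x\rangle+\frac{1}{2\alpha_k}\|\mathbf x-\mathbf x_k\|_{\mathbf B_k}^2$; let $\boldsymbol\beta_k$ be the (unique) minimizer of $\boldsymbol\beta\mapsto\bar F_k(\mathbf V_k\boldsymbol\beta)$ over $\{\boldsymbol\beta:\mathbf V_k\boldsymbol\beta\in\mathcal C\}$, and set $\mathbf x_{k+1}=\mathbf V_k\boldsymbol\beta_k$. Then, if $k\le K$: compute $\mathbf r_k=\nabla\bar F_k(\mathbf x_{k+1})=\mathbf A^H(\mathbf A\mathbf x_{k+1}-\mathbf y)+\nabla f(\mathbf x_k)+\alpha_k^{-1}\mathbf B_k(\mathbf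 x_{k+1}-\mathbf x_k)$ and $\tilde{\mathbf r}_k=(\mathbf I-\mathbf V_k\mathbf V_k^H)\mathbf r_k$; if $\tilde{\mathbf r}_k\ne\mathbf 0$ set $\mathbf V_{k+1}=[\mathbf V_k,\ \tilde{\mathbf r}_k/\|\tilde{\mathbf r}_k\|]$, otherwise $\mathbf V_{k+1}=\mathbf V_k$. If $k>K$: set $\mathbf V_{k+1}=\mathbf I_N$. (Thus every $\mathbf V_k$ has orthonormal columns, $\mathbf V_k^H\mathbf V_k=\mathbf I$.) KL inequality. A proper lower semicontinuous $\chi:\mathbb C^N\to(-\infty,+\infty]$ satisfies the Kurdyka–Łojasiewicz inequality at $\bar{\mathbf x}\in\operatorname{dom}\partial\chi$ if there exist $\eta>0$, a neighborhood $\mathcal U$ of $\bar{\mathbf x}$ and a continuous concave $\varphi:[0,\eta)\to\mathbb R_+$, continuously differentiable on $(0,\eta)$, with $\varphi(0)=0$ and $\varphi'>0$ on $(0,\eta)$, such that $\varphi'(|\chi(\mathbf x)-\chi(\bar{\mathbf x})|)\cdot\operatorname{dist}(\mathbf 0,\partial\chi(\mathbf x))\ge1$ for all $\mathbf x\in\mathcal U$ with $|\chi(\mathbf x)-\chi(\bar{\mathbf x})|<\eta$. Here $\partial$ denotes the (limiting) subdifferential and $\operatorname{dist}$ the Euclidean distance. *)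

theory Defs
  imports "HOL-Analysis.Analysis"
begin

text \<open>The real inner product
  (x \<bullet> y) on complex ^ 'n coincides with Re of the Hermitian product, and norm is the
  Euclidean norm; gradients are taken w.r.t. this real inner product.\<close>

definition cinner :: "complex ^ 'n \<Rightarrow> complex ^ 'n \<Rightarrow> complex" where
  "cinner u v = (\<Sum>i\<in>UNIV. cnj (u $ i) * v $ i)"

definition cadj :: "complex ^ 'n ^ 'm \<Rightarrow> complex ^ 'm ^ 'n" where
  "cadj M = (\<chi> i j. cnj (M $ j $ i))"

definition hermitian :: "complex ^ 'n ^ 'n \<Rightarrow> bool" where
  "hermitian M \<longleftrightarrow> cadj M = M"

definition mnorm2 :: "complex ^ 'n ^ 'n \<Rightarrow> complex ^ 'n \<Rightarrow> real" where
  "mnorm2 M x = Re (cinner x (M *v x))"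

text \<open>A matrix with columns vs (a list of column vectors) applied to beta.\<close>
definition colmult :: "(complex ^ 'n) list \<Rightarrow> (nat \<Rightarrow> complex) \<Rightarrow> complex ^ 'n" where
  "colmult vs b = (\<Sum>j<length vs. b j *s (vs ! j))"

definition colspace :: "(complex ^ 'n) list \<Rightarrow> (complex ^ 'n) set" where
  "colspace vs = range (colmult vs)"

text \<open>(I - V V^H) r for V with columns vs.\<close>
definition projperp :: "(complex ^ 'n) list \<Rightarrow> complex ^ 'n \<Rightarrow> complex ^ 'n" where
  "projperp vs r = r - (\<Sum>j<length vs. cinner (vs ! j) r *s (vs ! j))"

definition ind :: "'a set \<Rightarrow> 'a \<Rightarrow> ereal" where
  "ind C x = (if x \<in> C then 0 else \<infinity>)"

definition frechet_subdiff :: "('a::real_inner \<Rightarrow> ereal) \<Rightarrow> 'a \<Rightarrow> 'a set" where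
  "frechet_subdiff g x = {v. \<bar>g x\<bar> \<noteq> \<infinity> \<and>
     (\<forall>\<epsilon>>0. \<exists>\<delta>>0. \<forall>z. 0 < norm (z - x) \<and> norm (z - x) < \<delta> \<longrightarrow>
        g z \<ge> g x + ereal (v \<bullet> (z - x) - \<epsilon> * norm (z - x)))}"

definition lsubdiff :: "('a::real_inner \<Rightarrow> ereal) \<Rightarrow> 'a \<Rightarrow> 'a set" where
  "lsubdiff g x = {v. \<bar>g x\<bar> \<noteq> \<infinity> \<and>
     (\<exists>xs vs. xs \<longlonglongrightarrow> x \<and> (\<lambda>j. g (xs j)) \<longlonglongrightarrow> g x \<and>
        (\<forall>j. vs j \<in> frechet_subdiff g (xs j)) \<and> vs \<longlonglongrightarrow> v)}"

text \<open>KL inequality at xbar with desingularizing function phi(s) = c s^(1-t),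
  constant eta and neighbourhood U (phi'(s) = c (1-t) s^(-t), s in (0,eta)).\<close>
definition KL_power_at ::
  "('a::real_inner \<Rightarrow> ereal) \<Rightarrow> 'a \<Rightarrow> real \<Rightarrow> real \<Rightarrow> real \<Rightarrow> 'a set \<Rightarrow> bool" where
  "KL_power_at g xbar c t \<eta> U \<longleftrightarrow>
     lsubdiff g xbar \<noteq> {} \<and> \<eta> > 0 \<and> open U \<and> xbar \<in> U \<and>
     (\<forall>z\<in>U. 0 < \<bar>g z - g xbar\<bar> \<and> \<bar>g z - g xbar\<bar> < ereal \<eta> \<longrightarrow>
        (\<forall>v\<in>lsubdiff g z.
           c * (1 - t) * (real_of_ereal \<bar>g z - g xbar\<bar>) powr (- t) * norm v \<ge> 1))"

end

theory Submission
  imports Defs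
begin

lemma re_cinner: "Re (cinner u v) = u \<bullet> v"
proof -
  have "Re (cinner u v) = (\<Sum>i\<in>UNIV. Re (cnj (u$i) * v$i))" unfolding cinner_def by (rule Re_sum)
  also have "\<dots> = (\<Sum>i\<in>UNIV. u$i \<bullet> v$i)" by (simp add: inner_complex_def)
  also have "\<dots> = u \<bullet> v" by (simp add: inner_vec_def)
  finally show ?thesis .
qed

lemma cinner_adj: "cinner (M *v u) w = cinner u (cadj M *v w)"
proof -
  have "cinner (M *v u) w = (\<Sum>i\<in>UNIV. \<Sum>j\<in>UNIV. cnj (M$i$j) * cnj (u$j) * w$i)"
    unfolding cinner_def matrix_vector_mult_def by (simp add: sum_distrib_right)
  also have "\<dots> = (\<Sum>j\<in>UNIV. \<Sum>i\<in>UNIV. cnj (M$i$j) * cnj (u$j) * w$i)"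
    by (rule sum.swap)
  also have "\<dots> = cinner u (cadj M *v w)"
    unfolding cinner_def matrix_vector_mult_def cadj_def by (simp add: sum_distrib_left mult_ac)
  finally show ?thesis .
qed

lemma inner_adj: "(M *v u) \<bullet> w = u \<bullet> (cadj M *v w)"
  by (metis re_cinner cinner_adj)

lemma herm_sym: "hermitian B \<Longrightarrow> (B *v u) \<bullet> w = u \<bullet> (B *v w)"
  unfolding hermitian_def by (metis inner_adj)

lemma mnorm2_inner: "mnorm2 B v = v \<bullet> (B *v v)"
  unfolding mnorm2_def by (simp add: re_cinner)

lemma mv_scaleR: "(M::complex^'n^'m) *v (s *\<^sub>R u) = s *\<^sub>R (M *v u)"
  using linear_scale[OF matrix_vector_mul_linear] by blast

lemma h_expand:
  fixes A :: "complex^'n^'m"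
  shows "(1/2) * (norm (A *v (u + d) - y))\<^sup>2 = (1/2) * (norm (A *v u - y))\<^sup>2
     + (cadj A *v (A *v u - y)) \<bullet> d + (1/2) * (norm (A *v d))\<^sup>2"
proof -
  have sq: "(norm (a + b))\<^sup>2 = (norm a)\<^sup>2 + 2 * (a \<bullet> b) + (norm b)\<^sup>2" for a b :: "complex^'m"
    by (simp add: power2_norm_eq_inner inner_add_left inner_add_right inner_commute)
  have "A *v (u + d) - y = (A *v u - y) + A *v d" by (simp add: matrix_vector_right_distrib)
  then have "(norm (A *v (u + d) - y))\<^sup>2 = (norm (A *v u - y))\<^sup>2 + 2 * ((A *v u - y) \<bullet> (A *v d)) + (norm (A *v d))\<^sup>2"
    by (simp only: sq)
  moreover have "(A *v u - y) \<bullet> (A *v d) = (cadj A *v (A *v u - y)) \<bullet> d"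
    by (metis inner_adj inner_commute)
  ultimately show ?thesis by simp
qed

lemma Q_expand:
  assumes "hermitian B"
  shows "mnorm2 B (u + d) = mnorm2 B u + 2 * ((B *v u) \<bullet> d) + mnorm2 B d"
proof -
  have "u \<bullet> (B *v d) = (B *v u) \<bullet> d" using herm_sym[OF assms] by simp
  moreover have "d \<bullet> (B *v u) = (B *v u) \<bullet> d" by (simp add: inner_commute)
  ultimately show ?thesis unfolding mnorm2_inner
    by (simp add: matrix_vector_right_distrib inner_add_left inner_add_right)
qed

lemma B_norm:
  fixes B :: "complex^'n^'n"
  assumes h: "hermitian B" and lo: "\<forall>v. el * (norm v)\<^sup>2 \<le> mnorm2 B v"
    and hi: "\<forall>v. mnorm2 B v \<le> eu * (norm v)\<^sup>2" and el: "el > 0"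
  shows "norm (B *v v) \<le> eu * norm v"
proof -
  define b where "b = (\<lambda>u w. u \<bullet> (B *v w))"
  have bsym: "b u w = b w u" for u w unfolding b_def using herm_sym[OF h] by (simp add: inner_commute)
  have bpos: "b w w \<ge> 0" for w using lo[rule_format, of w] el unfolding b_def mnorm2_inner
    by (smt (verit) mult_nonneg_nonneg zero_le_power2)
  have bexp: "b (u + s *\<^sub>R w) (u + s *\<^sub>R w) = b u u + 2 * s * b u w + s\<^sup>2 * b w w" for u w s
    unfolding b_def using bsym[unfolded b_def, of u w]
    by (simp add: matrix_vector_right_distrib mv_scaleR inner_add_left inner_add_right power2_eq_square algebra_simps)
  have cs: "(b u w)\<^sup>2 \<le> b u u * b w w" for u w
  proof (cases "b w w = 0")
    case True
    have "el * (norm w)\<^sup>2 \<le> 0" using lo True unfolding b_def mnorm2_inner by metis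
    then have "w = 0" using el by (simp add: mult_le_0_iff)
    then have "b u w = 0" unfolding b_def by simp
    then show ?thesis using True by simp
  next
    case False
    then have p: "b w w > 0" using bpos[of w] by simp
    have "0 \<le> b u u + 2 * (- b u w / b w w) * b u w + (- b u w / b w w)\<^sup>2 * b w w"
      using bpos[of "u + (- b u w / b w w) *\<^sub>R w"] bexp[of u "- b u w / b w w" w] by simp
    also have "\<dots> = b u u - (b u w)\<^sup>2 / b w w" using p by (simp add: field_simps power2_eq_square)
    finally show ?thesis using p by (simp add: field_simps)
  qed
  have n2: "(norm (B *v v))\<^sup>2 = b (B *v v) v" unfolding b_def by (simp add: power2_norm_eq_inner)
  have "((norm (B *v v))\<^sup>2)\<^sup>2 \<le> b (B *v v) (B *v v) * b v v" using cs[of "B *v v" v] n2 by simp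
  also have "\<dots> \<le> (eu * (norm (B *v v))\<^sup>2) * (eu * (norm v)\<^sup>2)"
  proof (rule mult_mono)
    show "b (B *v v) (B *v v) \<le> eu * (norm (B *v v))\<^sup>2" using hi unfolding b_def mnorm2_inner by blast
    show "b v v \<le> eu * (norm v)\<^sup>2" using hi unfolding b_def mnorm2_inner by blast
    show "0 \<le> eu * (norm (B *v v))\<^sup>2" using bpos[of "B *v v"] hi unfolding b_def mnorm2_inner by (meson order_trans)
    show "0 \<le> b v v" by (rule bpos)
  qed
  also have "\<dots> = (norm (B *v v))\<^sup>2 * ((eu * norm v)\<^sup>2)"
    by (simp add: power2_eq_square mult_ac)
  finally have *: "((norm (B *v v))\<^sup>2)\<^sup>2 \<le> (norm (B *v v))\<^sup>2 * ((eu * norm v)\<^sup>2)" .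
  show ?thesis
  proof (cases "v = 0")
    case True then show ?thesis by simp
  next
  case vnz: False
  have "el * (norm v)\<^sup>2 \<le> eu * (norm v)\<^sup>2" using lo hi by (meson order_trans)
  then have "el \<le> eu" using vnz by simp
  then have eu: "eu \<ge> 0" using el by simp
  show ?thesis
  proof (cases "B *v v = 0")
    case True then show ?thesis using eu by simp
  next
    case False
    then have "(norm (B *v v))\<^sup>2 > 0" by simp
    moreover have "(norm (B *v v))\<^sup>2 * (norm (B *v v))\<^sup>2 \<le> (norm (B *v v))\<^sup>2 * ((eu * norm v)\<^sup>2)"
      using * by (simp only: power2_eq_square[of "(norm (B *v v))\<^sup>2"])
    ultimately have "(norm (B *v v))\<^sup>2 \<le> (eu * norm v)\<^sup>2" 
      using mult_le_cancel_left_pos by blast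
    then show ?thesis using eu by (simp add: power2_le_iff_abs_le)
  qed
  qed
qed

lemma path_deriv:
  fixes f :: "'a::real_inner \<Rightarrow> real"
  assumes fg: "\<forall>z. (f has_derivative (\<lambda>h. gf z \<bullet> h)) (at z)"
  shows "DERIV (\<lambda>s. f (u + s *\<^sub>R d)) s :> gf (u + s *\<^sub>R d) \<bullet> d"
proof -
  have p: "((\<lambda>s. u + s *\<^sub>R d) has_derivative (\<lambda>h. h *\<^sub>R d)) (at s)"
    by (auto intro!: derivative_eq_intros)
  have "((\<lambda>s. f (u + s *\<^sub>R d)) has_derivative (\<lambda>h. gf (u + s *\<^sub>R d) \<bullet> (h *\<^sub>R d))) (at s)"
    using has_derivative_compose[OF p fg[rule_format]] by simp
  then show ?thesis
    by (rule has_derivative_imp_has_field_derivative) (simp add: mult.commute)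
qed

lemma descent:
  fixes f :: "'a::real_inner \<Rightarrow> real"
  assumes fg: "\<forall>z. (f has_derivative (\<lambda>h. gf z \<bullet> h)) (at z)"
    and lip: "\<forall>z1 z2. norm (gf z1 - gf z2) \<le> L * norm (z1 - z2)"
  shows "\<bar>f (u + d) - f u - gf u \<bullet> d\<bar> \<le> L / 2 * (norm d)\<^sup>2"
proof -
  have bnd: "\<bar>(gf (u + s *\<^sub>R d) - gf u) \<bullet> d\<bar> \<le> L * s * (norm d)\<^sup>2" if "0 \<le> s" for s
  proof -
    have "\<bar>(gf (u + s *\<^sub>R d) - gf u) \<bullet> d\<bar> \<le> norm (gf (u + s *\<^sub>R d) - gf u) * norm d"
      by (rule Cauchy_Schwarz_ineq2)
    also have "\<dots> \<le> (L * norm (s *\<^sub>R d)) * norm d"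
      using lip[rule_format, of "u + s *\<^sub>R d" u] by (simp add: mult_right_mono)
    also have "\<dots> = L * s * (norm d)\<^sup>2" using that by (simp add: power2_eq_square)
    finally show ?thesis .
  qed
  define \<phi> where "\<phi> = (\<lambda>e s. f (u + s *\<^sub>R d) - s * (gf u \<bullet> d) + e * (L / 2 * s\<^sup>2 * (norm d)\<^sup>2))"
  have D: "DERIV (\<phi> e) s :> (gf (u + s *\<^sub>R d) \<bullet> d - gf u \<bullet> d + e * (L * s * (norm d)\<^sup>2))" for e s
    unfolding \<phi>_def
    by (auto intro!: derivative_eq_intros path_deriv[OF fg] simp: power2_eq_square algebra_simps)
  have mvt: "\<exists>z. 0 < z \<and> z < 1 \<and> \<phi> e 1 - \<phi> e 0 = (1 - 0) * (gf (u + z *\<^sub>R d) \<bullet> d - gf u \<bullet> d + e * (L * z * (norm d)\<^sup>2))" for e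
    by (rule MVT2) (use D in auto)
  from mvt[of 1] obtain z1 where z1: "0 < z1" "z1 < 1"
    "\<phi> 1 1 - \<phi> 1 0 = gf (u + z1 *\<^sub>R d) \<bullet> d - gf u \<bullet> d + L * z1 * (norm d)\<^sup>2" by auto
  from mvt[of "-1"] obtain z2 where z2: "0 < z2" "z2 < 1"
    "\<phi> (-1) 1 - \<phi> (-1) 0 = gf (u + z2 *\<^sub>R d) \<bullet> d - gf u \<bullet> d - L * z2 * (norm d)\<^sup>2" by auto
  have b1: "\<bar>(gf (u + z1 *\<^sub>R d) - gf u) \<bullet> d\<bar> \<le> L * z1 * (norm d)\<^sup>2" using bnd z1 by simp
  have b2: "\<bar>(gf (u + z2 *\<^sub>R d) - gf u) \<bullet> d\<bar> \<le> L * z2 * (norm d)\<^sup>2" using bnd z2 by simp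
  have "\<phi> 1 1 - \<phi> 1 0 \<ge> 0" using z1(3) b1 by (simp add: inner_diff_left)
  moreover have "\<phi> (-1) 1 - \<phi> (-1) 0 \<le> 0" using z2(3) b2 by (simp add: inner_diff_left)
  ultimately have "f (u + d) - f u - gf u \<bullet> d \<le> L / 2 * (norm d)\<^sup>2"
    "- (L / 2 * (norm d)\<^sup>2) \<le> f (u + d) - f u - gf u \<bullet> d"
    unfolding \<phi>_def by simp_all
  then show ?thesis by (intro abs_leI) linarith+
qed

lemma colmult_nth: "colmult vs b $ i = (\<Sum>j<length vs. b j * vs ! j $ i)"
  unfolding colmult_def by (simp add: sum_component)

lemma colspace_mono: "colspace vs \<subseteq> colspace (vs @ [a])"
proof
  fix u assume "u \<in> colspace vs"
  then obtain b where u: "u = colmult vs b" unfolding colspace_def by auto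
  have "colmult (vs @ [a]) (b(length vs := 0)) = u"
    unfolding u vec_eq_iff colmult_nth by (simp add: nth_append)
  then show "u \<in> colspace (vs @ [a])" unfolding colspace_def by (metis rangeI)
qed

lemma colspace_affine:
  assumes "u \<in> colspace vs" "w \<in> colspace vs"
  shows "u + s *\<^sub>R (w - u) \<in> colspace vs"
proof -
  obtain bu bw where u: "u = colmult vs bu" and w: "w = colmult vs bw"
    using assms unfolding colspace_def by auto
  have "colmult vs (\<lambda>j. bu j + of_real s * (bw j - bu j)) = u + s *\<^sub>R (w - u)"
    unfolding u w vec_eq_iff vector_add_component vector_minus_component vector_scaleR_component colmult_nth
    by (simp add: scaleR_conv_of_real sum.distrib sum_distrib_left sum_subtractf algebra_simps)
  then show ?thesis unfolding colspace_def by (metis rangeI)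
qed

locale gksm =
  fixes A :: "complex ^ 'n ^ 'm" and y :: "complex ^ 'm"
    and f :: "complex ^ 'n \<Rightarrow> real" and gf :: "complex ^ 'n \<Rightarrow> complex ^ 'n"
    and L :: real and C :: "(complex ^ 'n) set" and K :: nat
    and \<alpha> :: "nat \<Rightarrow> real" and \<alpha>min \<alpha>max :: real
    and B :: "nat \<Rightarrow> complex ^ 'n ^ 'n" and \<eta>l \<eta>u :: real
    and V :: "nat \<Rightarrow> (complex ^ 'n) list" and x :: "nat \<Rightarrow> complex ^ 'n"
    and F :: "complex ^ 'n \<Rightarrow> real" and FC :: "complex ^ 'n \<Rightarrow> ereal"
    and Fbar :: "nat \<Rightarrow> complex ^ 'n \<Rightarrow> real"
    and S :: "nat \<Rightarrow> (complex ^ 'n) set" and r :: "nat \<Rightarrow> complex ^ 'n"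
    and \<upsilon> :: real
  assumes Ahy: "cadj A *v y \<noteq> 0"
    and f_grad: "\<forall>z. (f has_derivative (\<lambda>h. gf z \<bullet> h)) (at z)"
    and f_bdd: "bdd_below (range f)"
    and L_pos: "L > 0"
    and gf_lip: "\<forall>z1 z2. norm (gf z1 - gf z2) \<le> L * norm (z1 - z2)"
    and C_ne: "C \<noteq> {}" and C_closed: "closed C" and C_convex: "convex C"
    and F_def: "\<forall>z. F z = (1/2) * (norm (A *v z - y))\<^sup>2 + f z"
    and FC_def: "\<forall>z. FC z = ereal (F z) + ind C z"
    and K_pos: "K \<ge> 1"
    and eta_pos: "0 < \<eta>l" and eta_le: "\<eta>l \<le> \<eta>u"
    and B_herm: "\<forall>k\<ge>1. hermitian (B k)"
    and B_bounds: "\<forall>k\<ge>1. \<forall>v. \<eta>l * (norm v)\<^sup>2 \<le> mnorm2 (B k) v \<and> mnorm2 (B k) v \<le> \<eta>u * (norm v)\<^sup>2"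
    and alpha_bounds: "0 < \<alpha>min" "\<forall>k\<ge>1. \<alpha>min \<le> \<alpha> k \<and> \<alpha> k \<le> \<alpha>max"
      "\<alpha>max < 2 * \<eta>l / (\<eta>l + L)"
    and upsilon_def: "\<upsilon> = \<eta>l / \<alpha>max - (\<eta>l + L) / 2"
    and V1: "V 1 = [(1 / norm (cadj A *v y)) *\<^sub>R (cadj A *v y)]"
    and x1: "x 1 \<in> C \<inter> colspace (V 1)"
    and Fbar_def: "\<forall>k\<ge>1. \<forall>z. Fbar k z = (1/2) * (norm (A *v z - y))\<^sup>2 + gf (x k) \<bullet> z
                      + 1 / (2 * \<alpha> k) * mnorm2 (B k) (z - x k)"
    and S_def: "\<forall>k\<ge>1. S k = (if k \<le> K + 1 then colspace (V k) else UNIV)"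
    and x_min: "\<forall>k\<ge>1. x (Suc k) \<in> C \<inter> S k \<and>
                  (\<forall>z\<in>C \<inter> S k. Fbar k (x (Suc k)) \<le> Fbar k z)"
    and r_def: "\<forall>k\<ge>1. r k = cadj A *v (A *v x (Suc k) - y) + gf (x k)
                   + (1 / \<alpha> k) *\<^sub>R (B k *v (x (Suc k) - x k))"
    and V_upd: "\<forall>k. 1 \<le> k \<and> k \<le> K \<longrightarrow>
                  V (Suc k) = (if projperp (V k) (r k) \<noteq> 0
                               then V k @ [(1 / norm (projperp (V k) (r k))) *\<^sub>R projperp (V k) (r k)]
                               else V k)"
begin

lemma alpha_pos: "k \<ge> 1 \<Longrightarrow> \<alpha> k > 0"
  using alpha_bounds by (meson less_le_trans)

lemma alpha_le: "k \<ge> 1 \<Longrightarrow> \<alpha> k \<le> \<alpha>max"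
  using alpha_bounds by blast

lemma alpha_ge: "k \<ge> 1 \<Longrightarrow> \<alpha>min \<le> \<alpha> k"
  using alpha_bounds by blast

lemma amax_pos: "\<alpha>max > 0"
  using alpha_pos[of 1] alpha_le[of 1] by simp

lemma ups_pos: "\<upsilon> > 0"
proof -
  have "\<alpha>max * (\<eta>l + L) < 2 * \<eta>l" using alpha_bounds(3) eta_pos L_pos
    by (simp add: pos_less_divide_eq mult.commute)
  then have "(\<eta>l + L) / 2 < \<eta>l / \<alpha>max" using amax_pos by (simp add: field_simps)
  then show ?thesis using upsilon_def by simp
qed

lemma xC: assumes "k \<ge> 1" shows "x k \<in> C"
proof (cases k)
  case 0 then show ?thesis using assms by simp
next
  case (Suc j) then show ?thesis
    using x1 x_min by (cases j) auto
qed

lemma xS: "k \<ge> 1 \<Longrightarrow> x k \<in> S k"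
proof (induction k rule: nat_induct_at_least)
  case base
  then show ?case using x1 S_def K_pos by simp
next
  case (Suc j)
  show ?case
  proof (cases "Suc j \<le> K + 1")
    case False then show ?thesis using S_def by simp
  next
    case True
    have "x (Suc j) \<in> S j" using x_min Suc by blast
    also have "S j = colspace (V j)" using S_def Suc True by simp
    also have "\<dots> \<subseteq> colspace (V (Suc j))"
      using V_upd[rule_format, of j] Suc True colspace_mono by auto
    also have "\<dots> = S (Suc j)" using S_def True by simp
    finally show ?thesis .
  qed
qed

lemma S_aff: "k \<ge> 1 \<Longrightarrow> u \<in> S k \<Longrightarrow> w \<in> S k \<Longrightarrow> u + s *\<^sub>R (w - u) \<in> S k"
  using S_def colspace_affine by (cases "k \<le> K + 1") auto

lemma C_aff: "u \<in> C \<Longrightarrow> w \<in> C \<Longrightarrow> 0 \<le> s \<Longrightarrow> s \<le> 1 \<Longrightarrow> u + s *\<^sub>R (w - u) \<in> C"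
proof -
  assume a: "u \<in> C" "w \<in> C" "0 \<le> s" "s \<le> 1"
  have "(1 - s) *\<^sub>R u + s *\<^sub>R w \<in> C" using convexD[OF C_convex a(1,2)] a(3,4) by simp
  moreover have "(1 - s) *\<^sub>R u + s *\<^sub>R w = u + s *\<^sub>R (w - u)" by (simp add: algebra_simps)
  ultimately show ?thesis by simp
qed

definition grad :: "nat \<Rightarrow> complex ^ 'n \<Rightarrow> complex ^ 'n" where
  "grad k u = cadj A *v (A *v u - y) + gf (x k) + (1 / \<alpha> k) *\<^sub>R (B k *v (u - x k))"

lemma r_grad: "k \<ge> 1 \<Longrightarrow> r k = grad k (x (Suc k))"
  using r_def grad_def by simp

lemma Fbar_expand:
  assumes k: "k \<ge> 1"
  shows "Fbar k (u + d) = Fbar k u + grad k u \<bullet> d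
           + ((1/2) * (norm (A *v d))\<^sup>2 + 1 / (2 * \<alpha> k) * mnorm2 (B k) d)"
proof -
  have e1: "u + d - x k = (u - x k) + d" by simp
  have q: "mnorm2 (B k) (u + d - x k) = mnorm2 (B k) (u - x k) + 2 * ((B k *v (u - x k)) \<bullet> d) + mnorm2 (B k) d"
    unfolding e1 by (rule Q_expand) (use B_herm k in blast)
  have g: "gf (x k) \<bullet> (u + d) = gf (x k) \<bullet> u + gf (x k) \<bullet> d" by (simp add: inner_add_right)
  have gr: "grad k u \<bullet> d = (cadj A *v (A *v u - y)) \<bullet> d + gf (x k) \<bullet> d + (1 / \<alpha> k) * ((B k *v (u - x k)) \<bullet> d)"
    unfolding grad_def by (simp add: inner_add_left)
  have a: "\<alpha> k > 0" using alpha_pos k .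
  show ?thesis
    using Fbar_def[rule_format, OF k, of "u + d"] Fbar_def[rule_format, OF k, of u] h_expand[of A u d y] q g gr a
    by (simp add: field_simps)
qed

lemma normB: "k \<ge> 1 \<Longrightarrow> norm (B k *v v) \<le> \<eta>u * norm v"
  by (rule B_norm) (use B_herm B_bounds eta_pos in auto)

lemma mnorm2_lo: "k \<ge> 1 \<Longrightarrow> \<eta>l * (norm v)\<^sup>2 \<le> mnorm2 (B k) v"
  using B_bounds by blast

lemma opt:
  assumes k: "k \<ge> 1" and w: "w \<in> C \<inter> S k"
  shows "r k \<bullet> (w - x (Suc k)) \<ge> 0"
proof (rule ccontr)
  assume neg: "\<not> ?thesis"
  define u where "u = x (Suc k)"
  define d where "d = w - u"
  define a where "a = r k \<bullet> d"
  define Q where "Q = (1/2) * (norm (A *v d))\<^sup>2 + 1 / (2 * \<alpha> k) * mnorm2 (B k) d"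
  have a0: "a < 0" using neg unfolding a_def d_def u_def by simp
  have Q0: "Q \<ge> 0"
  proof -
    have "0 \<le> \<eta>l * (norm d)\<^sup>2" using eta_pos by simp
    also have "\<dots> \<le> mnorm2 (B k) d" using mnorm2_lo k by blast
    finally show ?thesis unfolding Q_def using alpha_pos[OF k] by simp
  qed
  define s where "s = - a / (Q - a)"
  have s0: "0 < s" "s \<le> 1" using a0 Q0 unfolding s_def by (auto simp: field_simps)
  have uC: "u \<in> C \<inter> S k" using x_min k unfolding u_def by blast
  have mem: "u + s *\<^sub>R d \<in> C \<inter> S k"
    using C_aff[of u w s] S_aff[OF k, of u w s] uC w s0 unfolding d_def by auto
  have "Fbar k u \<le> Fbar k (u + s *\<^sub>R d)" using x_min k mem unfolding u_def by blast
  also have "\<dots> = Fbar k u + grad k u \<bullet> (s *\<^sub>R d)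
           + ((1/2) * (norm (A *v (s *\<^sub>R d)))\<^sup>2 + 1 / (2 * \<alpha> k) * mnorm2 (B k) (s *\<^sub>R d))"
    by (rule Fbar_expand[OF k])
  also have "\<dots> = Fbar k u + s * a + s\<^sup>2 * Q"
    unfolding a_def Q_def r_grad[OF k] u_def[symmetric]
    by (simp add: mv_scaleR mnorm2_inner power2_eq_square algebra_simps)
  finally have "0 \<le> s * a + s\<^sup>2 * Q" by simp
  moreover have "s * a + s\<^sup>2 * Q = s * (a + s * Q)" by (simp add: power2_eq_square algebra_simps)
  ultimately have "0 \<le> s * (a + s * Q)" by simp
  then have "0 \<le> a + s * Q" using s0 by (simp add: zero_le_mult_iff)
  moreover have "a + s * Q = - a\<^sup>2 / (Q - a)" unfolding s_def using a0 Q0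
    by (simp add: field_simps power2_eq_square)
  moreover have "- a\<^sup>2 / (Q - a) < 0" using a0 Q0 by (simp add: divide_neg_pos)
  ultimately show False by simp
qed

end

context gksm begin

abbreviation hh :: "complex ^ 'n \<Rightarrow> real" where
  "hh z \<equiv> (1/2) * (norm (A *v z - y))\<^sup>2"

lemma F_eq: "F z = hh z + f z" using F_def by simp

lemma decrease:
  assumes k: "k \<ge> 1"
  shows "F (x (Suc k)) + \<upsilon> * (norm (x (Suc k) - x k))\<^sup>2 \<le> F (x k)"
proof -
  define u where "u = x (Suc k)"
  define xk where "xk = x k"
  define n where "n = norm (u - xk)"
  have a: "\<alpha> k > 0" "\<alpha> k \<le> \<alpha>max" using alpha_pos[OF k] alpha_le[OF k] by auto
  have nd: "norm (xk - u) = n" unfolding n_def by (simp add: norm_minus_commute)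
  have o: "r k \<bullet> (xk - u) \<ge> 0" using opt[OF k, of xk] xC[OF k] xS[OF k] unfolding xk_def u_def by blast
  have e: "Fbar k xk = Fbar k u + r k \<bullet> (xk - u)
           + ((1/2) * (norm (A *v (xk - u)))\<^sup>2 + 1 / (2 * \<alpha> k) * mnorm2 (B k) (xk - u))"
    using Fbar_expand[OF k, of u "xk - u"] r_grad[OF k] unfolding u_def by simp
  have m1: "\<eta>l * n\<^sup>2 \<le> mnorm2 (B k) (xk - u)" using mnorm2_lo[OF k, of "xk - u"] nd by simp
  have m2: "\<eta>l * n\<^sup>2 \<le> mnorm2 (B k) (u - xk)" using mnorm2_lo[OF k, of "u - xk"] n_def by simp
  have q1: "\<eta>l * n\<^sup>2 / (2 * \<alpha> k) \<le> 1 / (2 * \<alpha> k) * mnorm2 (B k) (xk - u)"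
    using m1 a by (simp add: divide_right_mono)
  have q2: "\<eta>l * n\<^sup>2 / (2 * \<alpha> k) \<le> 1 / (2 * \<alpha> k) * mnorm2 (B k) (u - xk)"
    using m2 a by (simp add: divide_right_mono)
  have fx: "Fbar k xk = hh xk + gf (x k) \<bullet> xk"
    using Fbar_def k unfolding xk_def by (simp add: mnorm2_inner)
  have fu: "Fbar k u = hh u + gf (x k) \<bullet> u + 1 / (2 * \<alpha> k) * mnorm2 (B k) (u - xk)"
    using Fbar_def k unfolding xk_def by simp
  have "hh u + gf xk \<bullet> u + \<eta>l * n\<^sup>2 / \<alpha> k \<le> hh xk + gf xk \<bullet> xk"
  proof -
    have "0 \<le> (1/2) * (norm (A *v (xk - u)))\<^sup>2" by simp
    then have "\<eta>l * n\<^sup>2 / \<alpha> k = \<eta>l * n\<^sup>2 / (2 * \<alpha> k) + \<eta>l * n\<^sup>2 / (2 * \<alpha> k)" by simp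
    then show ?thesis using e fx fu q1 q2 o \<open>0 \<le> (1/2) * (norm (A *v (xk - u)))\<^sup>2\<close>
      unfolding xk_def by linarith
  qed
  then have hi: "hh u + gf xk \<bullet> (u - xk) + \<eta>l * n\<^sup>2 / \<alpha> k \<le> hh xk"
    using inner_diff_right[of "gf xk" u xk] by linarith
  have de: "f u - f xk - gf xk \<bullet> (u - xk) \<le> L / 2 * n\<^sup>2"
    using abs_le_D1[OF descent[OF f_grad gf_lip, of xk "u - xk"]] unfolding n_def by simp
  have "\<eta>l / \<alpha>max \<le> \<eta>l / \<alpha> k" using a eta_pos by (simp add: frac_le)
  moreover have "(\<eta>l + L) / 2 \<ge> L / 2" using eta_pos by (simp add: divide_right_mono)
  ultimately have "\<upsilon> \<le> \<eta>l / \<alpha> k - L / 2" using upsilon_def by linarith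
  then have "\<upsilon> * n\<^sup>2 \<le> (\<eta>l / \<alpha> k - L / 2) * n\<^sup>2" by (simp add: mult_right_mono)
  then have "F u + \<upsilon> * n\<^sup>2 \<le> F xk"
  proof -
    have e3: "(\<eta>l / \<alpha> k - L / 2) * n\<^sup>2 = \<eta>l * n\<^sup>2 / \<alpha> k - L / 2 * n\<^sup>2"
      by (simp add: left_diff_distrib)
    show ?thesis using hi de F_eq[of u] F_eq[of xk] e3 \<open>\<upsilon> * n\<^sup>2 \<le> (\<eta>l / \<alpha> k - L / 2) * n\<^sup>2\<close>
      by linarith
  qed
  then show ?thesis unfolding u_def xk_def n_def .
qed

end

context gksm begin

lemma Fdec: "k \<ge> 1 \<Longrightarrow> F (x (Suc k)) \<le> F (x k)"
  using decrease[of k] ups_pos by (smt (verit) mult_nonneg_nonneg zero_le_power2)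

lemma Fmono: assumes "1 \<le> k" "k \<le> m" shows "F (x m) \<le> F (x k)"
  using assms(2)
proof (induction m rule: dec_induct)
  case base then show ?case by simp
next
  case (step m) then show ?case using Fdec[of m] assms(1) by simp
qed

lemma F_lb: "\<exists>m. \<forall>z. m \<le> F z"
proof -
  obtain m where "\<forall>z. m \<le> f z" using f_bdd unfolding bdd_below_def by auto
  moreover have "0 \<le> hh z" for z by simp
  ultimately have "m \<le> F z" for z using F_eq[of z] by (metis add_mono add_0)
  then show ?thesis by blast
qed

lemma gf_tendsto:
  assumes "X \<longlonglongrightarrow> l" shows "(\<lambda>j. gf (X j)) \<longlonglongrightarrow> gf l"
proof -
  have "(\<lambda>j. X j - l) \<longlonglongrightarrow> 0" using Lim_null[THEN iffD1, OF assms] .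
  then have "(\<lambda>j. norm (X j - l)) \<longlonglongrightarrow> 0" by (rule tendsto_norm_zero)
  then have "(\<lambda>j. L * norm (X j - l)) \<longlonglongrightarrow> L * 0" by (intro tendsto_mult tendsto_const)
  then have "(\<lambda>j. L * norm (X j - l)) \<longlonglongrightarrow> 0" by simp
  then have "(\<lambda>j. gf (X j) - gf l) \<longlonglongrightarrow> 0"
    by (rule Lim_null_comparison[rotated]) (use gf_lip in auto)
  then show ?thesis by (rule Lim_null[THEN iffD2])
qed

lemma gh_tendsto:
  assumes "X \<longlonglongrightarrow> l" shows "(\<lambda>j. cadj A *v (A *v X j - y)) \<longlonglongrightarrow> cadj A *v (A *v l - y)"
  by (intro bounded_linear.tendsto[OF matrix_vector_mul_bounded_linear] tendsto_diff tendsto_const assms)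

lemma F_cont:
  assumes "X \<longlonglongrightarrow> l" shows "(\<lambda>j. F (X j)) \<longlonglongrightarrow> F l"
proof -
  have fc: "isCont f z" for z using f_grad has_derivative_continuous by blast
  have "(\<lambda>j. f (X j)) \<longlonglongrightarrow> f l" using fc assms isCont_tendsto_compose by blast
  moreover have "(\<lambda>j. A *v X j - y) \<longlonglongrightarrow> A *v l - y"
    by (intro bounded_linear.tendsto[OF matrix_vector_mul_bounded_linear] tendsto_diff tendsto_const assms)
  then have "(\<lambda>j. norm (A *v X j - y)) \<longlonglongrightarrow> norm (A *v l - y)" by (rule tendsto_norm)
  then have "(\<lambda>j. hh (X j)) \<longlonglongrightarrow> hh l" by (intro tendsto_mult tendsto_const tendsto_power)
  ultimately have "(\<lambda>j. hh (X j) + f (X j)) \<longlonglongrightarrow> hh l + f l"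
    by (intro tendsto_add)
  then show ?thesis using F_eq by simp
qed

lemma diff_to_0: "(\<lambda>k. norm (x (Suc k) - x k)) \<longlonglongrightarrow> 0"
proof -
  define a where "a = (\<lambda>k. F (x (Suc k)))"
  obtain m where m: "\<forall>z. m \<le> F z" using F_lb by blast
  have "decseq a" unfolding a_def by (rule decseq_SucI) (use Fdec in simp)
  then obtain La where La: "a \<longlonglongrightarrow> La" using decseq_convergent[of a m] m unfolding a_def by blast
  then have "(\<lambda>k. a k - a (Suc k)) \<longlonglongrightarrow> La - La"
    by (intro tendsto_diff) (auto simp: filterlim_sequentially_Suc[of a])
  then have d0: "(\<lambda>k. (a k - a (Suc k)) / \<upsilon>) \<longlonglongrightarrow> 0" using tendsto_divide_zero by fastforce
  have "(\<lambda>k. (norm (x (Suc (Suc k)) - x (Suc k)))\<^sup>2) \<longlonglongrightarrow> 0"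
  proof (rule Lim_null_comparison[OF _ d0], rule always_eventually, rule allI)
    fix k
    have "\<upsilon> * (norm (x (Suc (Suc k)) - x (Suc k)))\<^sup>2 \<le> a k - a (Suc k)"
      using decrease[of "Suc k"] unfolding a_def by simp
    then show "norm ((norm (x (Suc (Suc k)) - x (Suc k)))\<^sup>2) \<le> (a k - a (Suc k)) / \<upsilon>"
      using ups_pos by (simp add: field_simps)
  qed
  then have "(\<lambda>k. sqrt ((norm (x (Suc (Suc k)) - x (Suc k)))\<^sup>2)) \<longlonglongrightarrow> sqrt 0"
    by (rule tendsto_real_sqrt)
  then have "(\<lambda>k. norm (x (Suc (Suc k)) - x (Suc k))) \<longlonglongrightarrow> 0" by simp
  then show ?thesis using filterlim_sequentially_Suc[of "\<lambda>k. norm (x (Suc k) - x k)"] by simp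
qed

lemma lsub_ind:
  assumes u: "u \<in> C" and w: "\<forall>z\<in>C. w \<bullet> (z - u) \<le> 0"
  shows "w \<in> lsubdiff (ind C) u"
proof -
  have fr: "w \<in> frechet_subdiff (ind C) u"
    unfolding frechet_subdiff_def
  proof (intro CollectI conjI allI impI)
    show "\<bar>ind C u\<bar> \<noteq> \<infinity>" using u by (simp add: ind_def)
    fix \<epsilon> :: real assume e: "\<epsilon> > 0"
    show "\<exists>\<delta>>0. \<forall>z. 0 < norm (z - u) \<and> norm (z - u) < \<delta> \<longrightarrow>
        ind C u + ereal (w \<bullet> (z - u) - \<epsilon> * norm (z - u)) \<le> ind C z"
    proof (intro exI[of _ 1] conjI allI impI)
      fix z assume "0 < norm (z - u) \<and> norm (z - u) < 1"
      show "ind C u + ereal (w \<bullet> (z - u) - \<epsilon> * norm (z - u)) \<le> ind C z"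
      proof (cases "z \<in> C")
        case True
        then have "w \<bullet> (z - u) - \<epsilon> * norm (z - u) \<le> 0" using w e by (smt (verit) mult_nonneg_nonneg norm_ge_zero)
        then show ?thesis using True u by (simp add: ind_def)
      next
        case False then show ?thesis by (simp add: ind_def)
      qed
    qed simp
  qed
  have "(\<lambda>j. u) \<longlonglongrightarrow> u \<and> (\<lambda>j. ind C ((\<lambda>j. u) j)) \<longlonglongrightarrow> ind C u \<and>
    (\<forall>j. (\<lambda>j. w) j \<in> frechet_subdiff (ind C) ((\<lambda>j. u) j)) \<and> (\<lambda>j. w) \<longlonglongrightarrow> w"
    using fr by simp
  moreover have "\<bar>ind C u\<bar> \<noteq> \<infinity>" using u by (simp add: ind_def)
  ultimately show ?thesis unfolding lsubdiff_def mem_Collect_eq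
    by (intro conjI exI[where x="\<lambda>j. u"] exI[where x="\<lambda>j. w"]) simp_all
qed

lemma lsub_FC:
  assumes u: "u \<in> C" and w: "\<forall>z\<in>C. w \<bullet> (z - u) \<le> 0"
  shows "cadj A *v (A *v u - y) + gf u + w \<in> lsubdiff FC u"
proof -
  define v where "v = cadj A *v (A *v u - y) + gf u + w"
  have FCi: "FC z = ereal (F z)" if "z \<in> C" for z using FC_def that by (simp add: ind_def)
  have FCo: "FC z = \<infinity>" if "z \<notin> C" for z using FC_def that by (simp add: ind_def)
  have fr: "v \<in> frechet_subdiff FC u"
    unfolding frechet_subdiff_def
  proof (intro CollectI conjI allI impI)
    show "\<bar>FC u\<bar> \<noteq> \<infinity>" using FCi[OF u] by simp
    fix \<epsilon> :: real assume e: "\<epsilon> > 0"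
    show "\<exists>\<delta>>0. \<forall>z. 0 < norm (z - u) \<and> norm (z - u) < \<delta> \<longrightarrow>
        FC u + ereal (v \<bullet> (z - u) - \<epsilon> * norm (z - u)) \<le> FC z"
    proof (intro exI[of _ "2 * \<epsilon> / L"] conjI allI impI)
      show "2 * \<epsilon> / L > 0" using e L_pos by simp
      fix z assume z: "0 < norm (z - u) \<and> norm (z - u) < 2 * \<epsilon> / L"
      show "FC u + ereal (v \<bullet> (z - u) - \<epsilon> * norm (z - u)) \<le> FC z"
      proof (cases "z \<in> C")
        case True
        define d where "d = z - u"
        have zd: "z = u + d" unfolding d_def by simp
        have h1: "hh z = hh u + (cadj A *v (A *v u - y)) \<bullet> d + (1/2) * (norm (A *v d))\<^sup>2"
          unfolding zd by (rule h_expand)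
        have f1: "- (L / 2 * (norm d)\<^sup>2) \<le> f z - f u - gf u \<bullet> d"
          using abs_le_D2[OF descent[OF f_grad gf_lip, of u d]] unfolding zd by linarith
        have wd: "w \<bullet> d \<le> 0" using w True unfolding d_def by blast
        have nd: "L * norm d < 2 * \<epsilon>" using z L_pos unfolding d_def by (simp add: field_simps)
        have "L / 2 * (norm d)\<^sup>2 = (L * norm d) / 2 * norm d" by (simp add: power2_eq_square)
        also have "\<dots> \<le> \<epsilon> * norm d" using nd by (intro mult_right_mono) auto
        finally have q: "L / 2 * (norm d)\<^sup>2 \<le> \<epsilon> * norm d" .
        have vd: "v \<bullet> d = (cadj A *v (A *v u - y)) \<bullet> d + gf u \<bullet> d + w \<bullet> d"
          unfolding v_def by (simp add: inner_add_left)
        have "F u + (v \<bullet> d - \<epsilon> * norm d) \<le> F z"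
        proof -
          have "0 \<le> (1/2) * (norm (A *v d))\<^sup>2" by simp
          then show ?thesis using F_eq[of u] F_eq[of z] h1 f1 wd q vd by linarith
        qed
        then show ?thesis using FCi[OF u] FCi[OF True] unfolding d_def by simp
      next
        case False then show ?thesis using FCo by simp
      qed
    qed
  qed
  have "(\<lambda>j. u) \<longlonglongrightarrow> u \<and> (\<lambda>j. FC ((\<lambda>j. u) j)) \<longlonglongrightarrow> FC u \<and>
    (\<forall>j. (\<lambda>j. v) j \<in> frechet_subdiff FC ((\<lambda>j. u) j)) \<and> (\<lambda>j. v) \<longlonglongrightarrow> v"
    using fr by simp
  moreover have "\<bar>FC u\<bar> \<noteq> \<infinity>" using FCi[OF u] by simp
  ultimately show ?thesis unfolding v_def[symmetric] lsubdiff_def mem_Collect_eq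
    by (intro conjI exI[where x="\<lambda>j. u"] exI[where x="\<lambda>j. v"]) simp_all
qed

end

lemma rate0:
  fixes rr :: "nat \<Rightarrow> real"
  assumes g: "\<gamma> > 0" and nn: "\<forall>k\<ge>K'. 0 \<le> rr k"
    and step: "\<forall>k\<ge>K'. (1/\<gamma>) * rr (Suc k) powr 0 \<le> rr k - rr (Suc k)"
  shows "\<forall>k\<ge>K'. rr (Suc k) \<le> max 0 (rr K' - (1/\<gamma>) * real (k - K' + 1))"
proof -
  have st: "rr (Suc k) = 0 \<or> rr (Suc k) \<le> rr k - 1/\<gamma>" if "k \<ge> K'" for k
    using step that by (cases "rr (Suc k) = 0") auto
  have "rr (Suc (K' + j)) \<le> max 0 (rr K' - (1/\<gamma>) * real (j + 1))" for j
  proof (induction j)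
    case 0
    then show ?case using st[of K'] by auto
  next
    case (Suc j)
    show ?case
    proof (cases "rr (Suc (Suc (K' + j))) = 0")
      case True then show ?thesis by simp
    next
      case False
      then have b: "rr (Suc (Suc (K' + j))) \<le> rr (Suc (K' + j)) - 1/\<gamma>" using st[of "Suc (K' + j)"] by auto
      have "rr (Suc (Suc (K' + j))) \<ge> 0" using nn by simp
      then have "rr (Suc (K' + j)) > 0" using b g by (smt (verit) divide_pos_pos)
      then have "rr (Suc (K' + j)) \<le> rr K' - (1/\<gamma>) * real (j + 1)" using Suc.IH by simp
      then have "rr (Suc (Suc (K' + j))) \<le> rr K' - (1/\<gamma>) * real (Suc j + 1)"
        using b by (simp add: algebra_simps)
      then show ?thesis by simp
    qed
  qed
  then show ?thesis
    by (metis add.commute le_add_diff_inverse add_diff_cancel_left')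
qed

lemma rate1:
  fixes rr :: "nat \<Rightarrow> real"
  assumes g: "\<gamma> > 0" and t: "0 < t" "t \<le> 1/2" and nn: "\<forall>k\<ge>K'. 0 \<le> rr k"
    and step: "\<forall>k\<ge>K'. (1/\<gamma>) * rr (Suc k) powr (2*t) \<le> rr k - rr (Suc k)"
  shows "\<forall>k\<ge>K'. rr (Suc k) \<le> (1 - rr K' powr (2*t - 1) / (rr K' powr (2*t - 1) + \<gamma>)) ^ (k - K' + 1) * rr K'"
proof -
  define FK where "FK = rr K'"
  define a where "a = FK powr (2*t - 1)"
  define \<rho> where "\<rho> = 1 - a / (a + \<gamma>)"
  have a0: "a \<ge> 0" unfolding a_def by simp
  have rho: "\<rho> = \<gamma> / (a + \<gamma>)" unfolding \<rho>_def using a0 g by (simp add: field_simps)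
  have rho0: "\<rho> \<ge> 0" using rho a0 g by simp
  have dec: "rr (Suc k) \<le> rr k" if "k \<ge> K'" for k
  proof -
    have "0 \<le> (1/\<gamma>) * rr (Suc k) powr (2*t)" using g by simp
    then show ?thesis using step that by fastforce
  qed
  have le: "rr (K' + j) \<le> FK" for j
  proof (induction j)
    case 0 then show ?case unfolding FK_def by simp
  next
    case (Suc j) then show ?case using dec[of "K' + j"] by simp
  qed
  have one: "rr (Suc k) \<le> \<rho> * rr k" if k: "k \<ge> K'" for k
  proof (cases "rr (Suc k) = 0")
    case True then show ?thesis using rho0 nn k by simp
  next
    case False
    define s where "s = rr (Suc k)"
    have s0: "s > 0" using False nn k unfolding s_def by (metis le_SucI order_le_less)
    have sF: "s \<le> FK" using le[of "Suc k - K'"] k unfolding s_def by (simp add: Suc_diff_le)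
    have "s powr (2*t) = s powr (1 + (2*t - 1))" by simp
    also have "\<dots> = s powr 1 * s powr (2*t - 1)" by (rule powr_add)
    also have "\<dots> = s * s powr (2*t - 1)" using s0 by simp
    finally have sp: "s powr (2*t) = s * s powr (2*t - 1)" .
    have "a \<le> s powr (2*t - 1)" unfolding a_def using powr_mono2'[of "2*t-1" s FK] s0 sF t by simp
    then have "s * a \<le> s powr (2*t)" using sp s0 by (simp add: mult_left_mono)
    then have "(1/\<gamma>) * (s * a) \<le> rr k - s" using step k g unfolding s_def
      by (smt (verit) divide_pos_pos mult_left_mono)
    then have "s * (a + \<gamma>) \<le> \<gamma> * rr k" using g by (simp add: field_simps)
    then have "s \<le> \<gamma> * rr k / (a + \<gamma>)" using a0 g by (simp add: field_simps)
    then show ?thesis unfolding s_def rho by simp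
  qed
  have "rr (Suc (K' + j)) \<le> \<rho> ^ (j + 1) * FK" for j
  proof (induction j)
    case 0 then show ?case using one[of K'] unfolding FK_def by simp
  next
    case (Suc j)
    have "rr (Suc (Suc (K' + j))) \<le> \<rho> * rr (Suc (K' + j))" using one[of "Suc (K' + j)"] by simp
    also have "\<dots> \<le> \<rho> * (\<rho> ^ (j + 1) * FK)" using Suc.IH rho0 by (simp add: mult_left_mono)
    finally show ?case by simp
  qed
  then show ?thesis unfolding \<rho>_def a_def FK_def
    by (metis add.commute le_add_diff_inverse add_diff_cancel_left')
qed

lemma pow_step_big:
  fixes s a p \<sigma> \<gamma> :: real
  assumes s0: "0 < s" and sa: "s < a" and p: "p < 0" and sig: "0 < \<sigma>" "\<sigma> < 1" and g: "\<gamma> > 0"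
    and stp: "(1/\<gamma>) * s powr (1 - p) \<le> a - s" and big: "(1 - \<sigma>) * a \<le> s"
  shows "s powr p - a powr p \<ge> (- p) * (1 - \<sigma>) powr (1 - p) / \<gamma>"
proof -
  have a0: "a > 0" using s0 sa by simp
  have der: "\<And>z. s \<le> z \<Longrightarrow> z \<le> a \<Longrightarrow> ((\<lambda>z. z powr p) has_real_derivative p * z powr (p - 1)) (at z)"
    using s0 by (intro has_real_derivative_powr) simp
  obtain \<xi> where xi: "s < \<xi>" "\<xi> < a" "a powr p - s powr p = (a - s) * (p * \<xi> powr (p - 1))"
    using MVT2[OF sa der] by blast
  have "a powr (p - 1) \<le> \<xi> powr (p - 1)" using powr_mono2'[of "p - 1" \<xi> a] xi s0 p by simp
  then have m1: "(a - s) * (- p) * a powr (p - 1) \<le> (a - s) * (- p) * \<xi> powr (p - 1)"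
    using sa p by (intro mult_left_mono) (auto simp: mult_nonneg_nonpos)
  have "((1 - \<sigma>) * a) powr (1 - p) \<le> s powr (1 - p)" using big sig a0 p by (intro powr_mono2) auto
  then have "(1 - \<sigma>) powr (1 - p) * a powr (1 - p) \<le> s powr (1 - p)" using sig a0 by (simp add: powr_mult)
  then have m2: "(1/\<gamma>) * ((1 - \<sigma>) powr (1 - p) * a powr (1 - p)) \<le> a - s" using stp g
    by (smt (verit, best) divide_pos_pos mult_left_mono)
  have "a powr (1 - p) * a powr (p - 1) = a powr ((1 - p) + (p - 1))" by (rule powr_add[symmetric])
  then have aa: "a powr (1 - p) * a powr (p - 1) = 1" using a0 by simp
  have "(- p) * (1 - \<sigma>) powr (1 - p) / \<gamma> = (1/\<gamma>) * ((1 - \<sigma>) powr (1 - p) * a powr (1 - p)) * (- p) * a powr (p - 1)"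
    using aa by (simp add: field_simps)
  also have "\<dots> \<le> (a - s) * (- p) * a powr (p - 1)"
    using m2 p by (intro mult_right_mono) (auto intro!: mult_nonneg_nonneg)
  also have "\<dots> \<le> (a - s) * (- p) * \<xi> powr (p - 1)" by (rule m1)
  also have "\<dots> = s powr p - a powr p" using xi(3) by (simp add: algebra_simps)
  finally show ?thesis .
qed

lemma pow_step_small:
  fixes s a p \<sigma> :: real
  assumes s0: "0 < s" and p: "p < 0" and sig: "0 < \<sigma>" "\<sigma> < 1" and small: "s < (1 - \<sigma>) * a"
  shows "s powr p - a powr p \<ge> ((1 - \<sigma>) powr p - 1) * a powr p"
proof -
  have "(1 - \<sigma>) * a > 0" using s0 small by simp
  then have a0: "a > 0" using sig by (simp add: zero_less_mult_iff)
  have "((1 - \<sigma>) * a) powr p < s powr p" using powr_less_mono2_neg[OF p s0 small] .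
  then have "(1 - \<sigma>) powr p * a powr p < s powr p" using sig a0 by (simp add: powr_mult)
  then show ?thesis by (simp add: algebra_simps)
qed

lemma rate2:
  fixes rr :: "nat \<Rightarrow> real"
  assumes g: "\<gamma> > 0" and t: "1/2 < t" "t < 1" and nn: "\<forall>k\<ge>K'. 0 \<le> rr k"
    and step: "\<forall>k\<ge>K'. (1/\<gamma>) * rr (Suc k) powr (2*t) \<le> rr k - rr (Suc k)"
    and lim: "rr \<longlonglongrightarrow> 0" and sig: "0 < \<sigma>" "\<sigma> < 1"
  shows "\<forall>\<^sub>F k in sequentially. rr (Suc k) \<le> (rr K' powr (1 - 2*t)
            + ((t - 1/2) * (1 - \<sigma>) powr (2*t) / \<gamma>) * real (k - K' + 1)) powr (1 / (1 - 2*t))"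
proof -
  define p where "p = 1 - 2*t"
  have p0: "p < 0" using t unfolding p_def by simp
  have p1: "1 - p = 2*t" unfolding p_def by simp
  define q where "q = (t - 1/2) * (1 - \<sigma>) powr (2*t) / \<gamma>"
  have q0: "q > 0" unfolding q_def using t sig g by simp
  have q2: "(- p) * (1 - \<sigma>) powr (1 - p) / \<gamma> = 2 * q" unfolding q_def p1 unfolding p_def
    using g by (simp add: field_simps)
  define D where "D = (1 - \<sigma>) powr p - 1"
  have "1 powr p < (1 - \<sigma>) powr p" using powr_less_mono2_neg[OF p0, of "1 - \<sigma>" 1] sig by simp
  then have D0: "D > 0" unfolding D_def by simp
  define \<delta> where "\<delta> = (2 * q / D) powr (1 / p)"
  have d0: "\<delta> > 0" unfolding \<delta>_def using q0 D0 by simp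
  have dp: "\<delta> powr p = 2 * q / D" unfolding \<delta>_def using p0 q0 D0 by (simp add: powr_powr)
  define FK where "FK = rr K'"
  have dec: "rr (Suc k) \<le> rr k" if "k \<ge> K'" for k
  proof -
    have "0 \<le> (1/\<gamma>) * rr (Suc k) powr (2*t)" using g by simp
    then show ?thesis using step that by fastforce
  qed
  have le: "rr (K' + j) \<le> FK" for j
  proof (induction j)
    case 0 then show ?case unfolding FK_def by simp
  next
    case (Suc j) then show ?case using dec[of "K' + j"] by simp
  qed
  have leF: "rr k \<le> FK" if "k \<ge> K'" for k using le[of "k - K'"] that by simp
  obtain N where N: "\<forall>k\<ge>N. rr k < \<delta>"
    using order_tendstoD(2)[OF lim d0] unfolding eventually_sequentially by blast
  define k1 where "k1 = max N K'"
  have inc: "rr (Suc k) powr p \<ge> rr k powr p + 2 * q" if k: "k \<ge> k1" and s0: "rr (Suc k) > 0" for k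
  proof -
    define s where "s = rr (Suc k)"
    define a where "a = rr k"
    have kK: "k \<ge> K'" using k unfolding k1_def by simp
    have stp: "(1/\<gamma>) * s powr (1 - p) \<le> a - s" using step kK unfolding s_def a_def p1 by simp
    have "(1/\<gamma>) * s powr (1 - p) > 0" using s0 g unfolding s_def by simp
    then have sa: "s < a" using stp by simp
    have s0': "0 < s" using s0 unfolding s_def .
    show ?thesis
    proof (cases "(1 - \<sigma>) * a \<le> s")
      case True
      from pow_step_big[OF s0' sa p0 sig g stp True] q2 show ?thesis unfolding s_def a_def by simp
    next
      case False
      then have sm: "s < (1 - \<sigma>) * a" by simp
      have ss: "s powr p - a powr p \<ge> D * a powr p" using pow_step_small[OF s0' p0 sig sm] unfolding D_def .
      have "a < \<delta>" using N k unfolding a_def k1_def by simp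
      then have "\<delta> powr p < a powr p" using powr_less_mono2_neg[OF p0, of a \<delta>] s0' sa by simp
      then have "2 * q / D < a powr p" using dp by simp
      then have "2 * q < D * a powr p" using D0 by (simp add: field_simps)
      then show ?thesis using ss unfolding s_def a_def by simp
    qed
  qed
  have acc: "rr (k1 + m) > 0 \<longrightarrow> rr (k1 + m) powr p \<ge> rr k1 powr p + 2 * q * real m" for m
  proof (induction m)
    case 0 then show ?case by simp
  next
    case (Suc m)
    show ?case
    proof
      assume pos: "rr (k1 + Suc m) > 0"
      have "k1 + m \<ge> K'" unfolding k1_def by simp
      then have "rr (k1 + m) \<ge> rr (k1 + Suc m)" using dec[of "k1 + m"] by simp
      then have "rr (k1 + m) > 0" using pos by simp
      then have ih: "rr (k1 + m) powr p \<ge> rr k1 powr p + 2 * q * real m" using Suc.IH by simp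
      have "rr (Suc (k1 + m)) powr p \<ge> rr (k1 + m) powr p + 2 * q" using inc[of "k1 + m"] pos by simp
      then show "rr (k1 + Suc m) powr p \<ge> rr k1 powr p + 2 * q * real (Suc m)" using ih
        by (simp add: algebra_simps)
    qed
  qed
  show ?thesis unfolding eventually_sequentially
  proof (intro exI[of _ "2 * k1"] allI impI)
    fix k assume k: "2 * k1 \<le> k"
    define base where "base = FK powr p + q * real (k - K' + 1)"
    show "rr (Suc k) \<le> (rr K' powr (1 - 2*t) + ((t - 1/2) * (1 - \<sigma>) powr (2*t) / \<gamma>) * real (k - K' + 1))
            powr (1 / (1 - 2*t))"
    proof (cases "rr (Suc k) > 0")
      case False
      then have "rr (Suc k) \<le> 0" by simp
      then show ?thesis by (meson order_trans powr_ge_zero)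
    next
      case True
      define m where "m = Suc k - k1"
      have km: "k1 + m = Suc k" unfolding m_def using k by simp
      have "rr (k1 + m) > 0" using True km by simp
      then have am: "rr (k1 + m) powr p \<ge> rr k1 powr p + 2 * q * real m" using acc by blast
      have "rr k1 \<ge> rr (k1 + m)" using dec
      proof (induction m)
        case 0 then show ?case by simp
      next
        case (Suc m)
        have "rr (k1 + Suc m) \<le> rr (k1 + m)" using dec[of "k1 + m"] unfolding k1_def by simp
        then show ?case using Suc by simp
      qed
      then have k1p: "rr k1 > 0" using \<open>rr (k1 + m) > 0\<close> by simp
      have "rr k1 \<le> FK" using leF[of k1] unfolding k1_def by simp
      then have "FK powr p \<le> rr k1 powr p" using powr_mono2'[of p "rr k1" FK] p0 k1p by simp
      moreover have "real (k - K' + 1) \<le> 2 * real m"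
      proof -
        have "k - K' + 1 \<le> 2 * m" unfolding m_def using k by simp
        then show ?thesis by linarith
      qed
      then have "q * real (k - K' + 1) \<le> 2 * q * real m" using q0 by (simp add: mult_left_mono)
      ultimately have bs: "base \<le> rr (Suc k) powr p" using am km unfolding base_def by simp
      have b0: "base > 0" unfolding base_def using q0 by (simp add: add_nonneg_pos)
      have "rr (Suc k) = (rr (Suc k) powr p) powr (1 / p)" using p0 True by (simp add: powr_powr)
      also have "\<dots> \<le> base powr (1 / p)" using powr_mono2'[of "1/p" base "rr (Suc k) powr p"] p0 b0 bs by simp
      finally show ?thesis unfolding base_def FK_def q_def p_def by simp
    qed
  qed
qed

lemma key_arith:
  fixes s n nv c t \<alpha> L eu \<upsilon> D \<gamma> :: real
  assumes s0: "s > 0" and n0: "n \<ge> 0" and c0: "c > 0" and t: "0 \<le> t" "t < 1" and a0: "\<alpha> > 0"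
    and u0: "\<upsilon> > 0" and L0: "L > 0" and e0: "eu > 0"
    and kl: "1 \<le> c * (1 - t) * s powr (-t) * nv" and nv: "nv \<le> (L + eu / \<alpha>) * n"
    and dd: "\<upsilon> * n\<^sup>2 \<le> D" and T: "(c * (L * \<alpha> + eu))\<^sup>2 / (\<upsilon> * (1 - t)\<^sup>2 * \<alpha>\<^sup>2) \<le> \<gamma>"
  shows "s powr (2*t) \<le> \<gamma> * D"
proof -
  define M where "M = L + eu / \<alpha>"
  have M0: "M > 0" unfolding M_def using add_pos_pos[OF L0 divide_pos_pos[OF e0 a0]] .
  have cf: "c * (1 - t) * s powr (-t) \<ge> 0" using c0 t by simp
  have h1: "1 \<le> c * (1 - t) * s powr (-t) * (M * n)"
    using kl nv cf unfolding M_def by (meson mult_left_mono order_trans)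
  have st: "s powr t * s powr (-t) = 1"
  proof -
    have "s powr t * s powr (-t) = s powr (t + -t)" by (rule powr_add[symmetric])
    then show ?thesis using s0 by simp
  qed
  have "s powr t \<le> s powr t * (c * (1 - t) * s powr (-t) * (M * n))"
    using h1 s0 by (simp add: mult_le_cancel_left1)
  also have "\<dots> = c * (1 - t) * M * n" using st by (simp add: algebra_simps)
  finally have h2: "s powr t \<le> c * (1 - t) * M * n" .
  have "s powr (2*t) = s powr t * s powr t" by (simp add: powr_add[symmetric])
  also have "\<dots> = (s powr t)\<^sup>2" by (simp add: power2_eq_square)
  also have "\<dots> \<le> (c * (1 - t) * M * n)\<^sup>2" using h2 by (intro power_mono) simp_all
  also have "\<dots> = c\<^sup>2 * (1 - t)\<^sup>2 * M\<^sup>2 * n\<^sup>2" by (simp add: power_mult_distrib)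
  also have "\<dots> = (c\<^sup>2 * (1 - t)\<^sup>2 * M\<^sup>2 / \<upsilon>) * (\<upsilon> * n\<^sup>2)" using u0 by simp
  also have "\<dots> \<le> (c\<^sup>2 * (1 - t)\<^sup>2 * M\<^sup>2 / \<upsilon>) * D" using dd u0 by (intro mult_left_mono) simp_all
  finally have h3: "s powr (2*t) \<le> (c\<^sup>2 * (1 - t)\<^sup>2 * M\<^sup>2 / \<upsilon>) * D" .
  have D0: "D \<ge> 0" using dd u0 by (smt (verit) mult_nonneg_nonneg zero_le_power2)
  have Teq: "(c * (L * \<alpha> + eu))\<^sup>2 / (\<upsilon> * (1 - t)\<^sup>2 * \<alpha>\<^sup>2) = (c\<^sup>2 * M\<^sup>2 / \<upsilon>) / (1 - t)\<^sup>2"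
    unfolding M_def using a0 u0 t by (simp add: field_simps power2_eq_square)
  have tt: "(1 - t)\<^sup>2 \<le> 1 / (1 - t)\<^sup>2"
  proof -
    have p: "(1 - t)\<^sup>2 > 0" "(1 - t)\<^sup>2 \<le> 1" using t by (auto simp: power_le_one)
    then have "(1 - t)\<^sup>2 * (1 - t)\<^sup>2 \<le> 1" by (intro mult_le_one) auto
    then show ?thesis using p by (simp add: field_simps)
  qed
  have K0: "c\<^sup>2 * (1 - t)\<^sup>2 * M\<^sup>2 / \<upsilon> \<le> \<gamma>"
  proof -
    have "c\<^sup>2 * (1 - t)\<^sup>2 * M\<^sup>2 / \<upsilon> = (c\<^sup>2 * M\<^sup>2 / \<upsilon>) * (1 - t)\<^sup>2" by simp
    also have "\<dots> \<le> (c\<^sup>2 * M\<^sup>2 / \<upsilon>) * (1 / (1 - t)\<^sup>2)" using tt u0 by (intro mult_left_mono) simp_all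
    also have "\<dots> = (c * (L * \<alpha> + eu))\<^sup>2 / (\<upsilon> * (1 - t)\<^sup>2 * \<alpha>\<^sup>2)" using Teq by simp
    also have "\<dots> \<le> \<gamma>" by (rule T)
    finally show ?thesis .
  qed
  show ?thesis using h3 K0 D0 by (meson mult_right_mono order_trans)
qed

context gksm begin

lemma cluster:
  assumes sm: "strict_mono \<sigma>" and lim: "(x \<circ> \<sigma>) \<longlonglongrightarrow> xh"
  shows "\<exists>v\<in>lsubdiff (ind C) xh. cadj A *v (A *v xh - y) + gf xh + v = 0"
proof -
  define G where "G = cadj A *v (A *v xh - y) + gf xh"
  have sge: "j \<le> \<sigma> j" for j using seq_suble[OF sm] .
  have ev: "\<forall>\<^sub>F j in sequentially. K + 2 \<le> \<sigma> j"
    unfolding eventually_sequentially using sge by (meson le_trans)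
  have lim': "(\<lambda>j. x (\<sigma> j)) \<longlonglongrightarrow> xh" using lim by (simp add: o_def)
  have xhC: "xh \<in> C"
  proof (rule Lim_in_closed_set[OF C_closed _ trivial_limit_sequentially lim'])
    show "\<forall>\<^sub>F j in sequentially. x (\<sigma> j) \<in> C"
      using ev by eventually_elim (use xC in simp)
  qed
  have D: "(\<lambda>k. x (Suc k) - x k) \<longlonglongrightarrow> 0" using tendsto_norm_zero_iff[THEN iffD1, OF diff_to_0] .
  have Ds: "(\<lambda>j. x (Suc (\<sigma> j)) - x (\<sigma> j)) \<longlonglongrightarrow> 0" using LIMSEQ_subseq_LIMSEQ[OF D sm] by (simp add: o_def)
  have xs1: "(\<lambda>j. x (Suc (\<sigma> j))) \<longlonglongrightarrow> xh" using tendsto_add[OF lim' Ds] by simp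
  have Bt: "(\<lambda>j. (1 / \<alpha> (\<sigma> j)) *\<^sub>R (B (\<sigma> j) *v (x (Suc (\<sigma> j)) - x (\<sigma> j)))) \<longlonglongrightarrow> 0"
  proof -
    have "(\<lambda>j. norm (x (Suc (\<sigma> j)) - x (\<sigma> j))) \<longlonglongrightarrow> 0" by (rule tendsto_norm_zero[OF Ds])
    then have "(\<lambda>j. (\<eta>u / \<alpha>min) * norm (x (Suc (\<sigma> j)) - x (\<sigma> j))) \<longlonglongrightarrow> (\<eta>u / \<alpha>min) * 0"
      by (intro tendsto_mult tendsto_const)
    then have nD: "(\<lambda>j. (\<eta>u / \<alpha>min) * norm (x (Suc (\<sigma> j)) - x (\<sigma> j))) \<longlonglongrightarrow> 0" by simp
    show ?thesis
    proof (rule Lim_null_comparison[OF _ nD])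
      show "\<forall>\<^sub>F j in sequentially. norm ((1 / \<alpha> (\<sigma> j)) *\<^sub>R (B (\<sigma> j) *v (x (Suc (\<sigma> j)) - x (\<sigma> j))))
              \<le> \<eta>u / \<alpha>min * norm (x (Suc (\<sigma> j)) - x (\<sigma> j))"
        using ev
      proof eventually_elim
        case (elim j)
        then have j1: "\<sigma> j \<ge> 1" by simp
        define v where "v = x (Suc (\<sigma> j)) - x (\<sigma> j)"
        have a: "\<alpha> (\<sigma> j) > 0" "\<alpha>min \<le> \<alpha> (\<sigma> j)" using alpha_pos[OF j1] alpha_ge[OF j1] by auto
        have eu: "\<eta>u \<ge> 0" using eta_pos eta_le by simp
        have "norm ((1 / \<alpha> (\<sigma> j)) *\<^sub>R (B (\<sigma> j) *v v)) = (1 / \<alpha> (\<sigma> j)) * norm (B (\<sigma> j) *v v)"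
          using a by simp
        also have "\<dots> \<le> (1 / \<alpha> (\<sigma> j)) * (\<eta>u * norm v)" using normB[OF j1] a by (intro mult_left_mono) auto
        also have "\<dots> \<le> (1 / \<alpha>min) * (\<eta>u * norm v)"
          using a alpha_bounds(1) eu by (intro mult_right_mono) (auto simp: frac_le)
        finally show ?case unfolding v_def by simp
      qed
    qed
  qed
  have rs: "(\<lambda>j. r (\<sigma> j)) \<longlonglongrightarrow> G"
  proof -
    have "(\<lambda>j. cadj A *v (A *v x (Suc (\<sigma> j)) - y) + gf (x (\<sigma> j))
        + (1 / \<alpha> (\<sigma> j)) *\<^sub>R (B (\<sigma> j) *v (x (Suc (\<sigma> j)) - x (\<sigma> j))))
        \<longlonglongrightarrow> cadj A *v (A *v xh - y) + gf xh + 0"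
      by (intro tendsto_add gh_tendsto[OF xs1] gf_tendsto[OF lim'] Bt)
    moreover have "\<forall>\<^sub>F j in sequentially. cadj A *v (A *v x (Suc (\<sigma> j)) - y) + gf (x (\<sigma> j))
        + (1 / \<alpha> (\<sigma> j)) *\<^sub>R (B (\<sigma> j) *v (x (Suc (\<sigma> j)) - x (\<sigma> j))) = r (\<sigma> j)"
      using ev by eventually_elim (use r_def in simp)
    ultimately show ?thesis unfolding G_def by (simp add: Lim_transform_eventually)
  qed
  have nc: "G \<bullet> (z - xh) \<ge> 0" if z: "z \<in> C" for z
  proof -
    have "(\<lambda>j. r (\<sigma> j) \<bullet> (z - x (Suc (\<sigma> j)))) \<longlonglongrightarrow> G \<bullet> (z - xh)"
      by (intro tendsto_inner rs tendsto_diff tendsto_const xs1)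
    moreover have "\<forall>\<^sub>F j in sequentially. 0 \<le> r (\<sigma> j) \<bullet> (z - x (Suc (\<sigma> j)))"
      using ev
    proof eventually_elim
      case (elim j)
      then have "z \<in> C \<inter> S (\<sigma> j)" using z S_def by simp
      then show ?case using opt[of "\<sigma> j" z] elim by simp
    qed
    ultimately show ?thesis by (rule tendsto_lowerbound) simp
  qed
  have "- G \<in> lsubdiff (ind C) xh"
    by (rule lsub_ind[OF xhC]) (use nc in \<open>simp add: inner_minus_left\<close>)
  then show ?thesis unfolding G_def[symmetric] by (intro bexI[of _ "- G"]) simp_all
qed

lemma gamma_facts:
  assumes c0: "c > 0" and t: "0 \<le> t" "t < 1"
  defines "T \<equiv> (\<lambda>k. (c * (L * \<alpha> k + \<eta>u))\<^sup>2 / (\<upsilon> * (1 - t)\<^sup>2 * (\<alpha> k)\<^sup>2))"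
  shows "\<forall>k\<ge>1. T k \<le> (SUP k\<in>{1..}. T k)" and "(SUP k\<in>{1..}. T k) > 0"
proof -
  have eu: "\<eta>u > 0" using eta_pos eta_le by simp
  have bd: "T k \<le> (c * (L * \<alpha>max + \<eta>u))\<^sup>2 / (\<upsilon> * (1 - t)\<^sup>2 * \<alpha>min\<^sup>2)" if k: "k \<ge> 1" for k
    unfolding T_def
  proof (rule frac_le)
    have a: "\<alpha>min \<le> \<alpha> k" "\<alpha> k \<le> \<alpha>max" "\<alpha> k > 0" using alpha_ge[OF k] alpha_le[OF k] alpha_pos[OF k] by auto
    show "0 \<le> (c * (L * \<alpha>max + \<eta>u))\<^sup>2" by simp
    have "c * (L * \<alpha> k + \<eta>u) \<le> c * (L * \<alpha>max + \<eta>u)" using a c0 L_pos by (intro mult_left_mono) auto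
    moreover have "0 \<le> c * (L * \<alpha> k + \<eta>u)" using a c0 L_pos eu by simp
    ultimately show "(c * (L * \<alpha> k + \<eta>u))\<^sup>2 \<le> (c * (L * \<alpha>max + \<eta>u))\<^sup>2" by (intro power_mono) auto
    show "0 < \<upsilon> * (1 - t)\<^sup>2 * \<alpha>min\<^sup>2" using ups_pos t alpha_bounds(1) by simp
    have "\<alpha>min\<^sup>2 \<le> (\<alpha> k)\<^sup>2" using a alpha_bounds(1) by (intro power_mono) auto
    then show "\<upsilon> * (1 - t)\<^sup>2 * \<alpha>min\<^sup>2 \<le> \<upsilon> * (1 - t)\<^sup>2 * (\<alpha> k)\<^sup>2"
      using ups_pos by (intro mult_left_mono) auto
  qed
  have bdd: "bdd_above (T ` {1..})" using bd by (intro bdd_aboveI2) auto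
  show up: "\<forall>k\<ge>1. T k \<le> (SUP k\<in>{1..}. T k)" using bdd by (auto intro: cSUP_upper)
  have "T 1 > 0" unfolding T_def
  proof (rule divide_pos_pos)
    have "c * (L * \<alpha> 1 + \<eta>u) > 0" using c0 alpha_pos[of 1] L_pos eu
      by (intro mult_pos_pos add_pos_pos) auto
    then show "0 < (c * (L * \<alpha> 1 + \<eta>u))\<^sup>2" by (rule zero_less_power)
    show "0 < \<upsilon> * (1 - t)\<^sup>2 * (\<alpha> 1)\<^sup>2" using ups_pos t alpha_pos[of 1] by simp
  qed
  then show "(SUP k\<in>{1..}. T k) > 0" using up by (meson less_le_trans order_refl)
qed

end

context gksm begin

lemma part2:
  assumes xl: "x \<longlonglongrightarrow> xs" and c0: "c > 0" and t0: "0 \<le> t" and t1: "t < 1" and Lam: "\<Lambda> > 0"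
    and cb: "cball xs \<Lambda> \<subseteq> U" and KL: "KL_power_at FC xs c t \<eta> U"
  shows "(\<exists>K'. K' > K + 1 \<and>
              (\<forall>k\<ge>K'. x k \<in> cball xs \<Lambda> \<and> \<bar>FC (x k) - ereal (F xs)\<bar> < ereal \<eta>) \<and>
              (let FK = F (x K') - F xs;
                   \<gamma> = (SUP k\<in>{1..}. (c * (L * \<alpha> k + \<eta>u))\<^sup>2 / (\<upsilon> * (1 - t)\<^sup>2 * (\<alpha> k)\<^sup>2))
               in (t = 0 \<longrightarrow> (\<forall>k\<ge>K'. F (x (Suc k)) - F xs
                                 \<le> max 0 (FK - (1 / \<gamma>) * real (k - K' + 1)))) \<and>
                  (0 < t \<and> t \<le> 1/2 \<longrightarrow> (\<forall>k\<ge>K'. F (x (Suc k)) - F xs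
                     \<le> (1 - FK powr (2*t - 1) / (FK powr (2*t - 1) + \<gamma>)) ^ (k - K' + 1) * FK)) \<and>
                  (1/2 < t \<and> t < 1 \<longrightarrow> (\<forall>\<sigma>. 0 < \<sigma> \<and> \<sigma> < 1 \<longrightarrow>
                     (\<forall>\<^sub>F k in sequentially. F (x (Suc k)) - F xs
                        \<le> (FK powr (1 - 2*t) + ((t - 1/2) * (1 - \<sigma>) powr (2*t) / \<gamma>) * real (k - K' + 1))
                             powr (1 / (1 - 2*t)))))))"
proof -
  have eta0: "\<eta> > 0" and kl: "\<forall>z\<in>U. 0 < \<bar>FC z - FC xs\<bar> \<and> \<bar>FC z - FC xs\<bar> < ereal \<eta> \<longrightarrow>
        (\<forall>v\<in>lsubdiff FC z. c * (1 - t) * (real_of_ereal \<bar>FC z - FC xs\<bar>) powr (- t) * norm v \<ge> 1)"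
    using KL unfolding KL_power_at_def by auto
  have xsC: "xs \<in> C"
  proof (rule Lim_in_closed_set[OF C_closed _ trivial_limit_sequentially xl])
    show "\<forall>\<^sub>F k in sequentially. x k \<in> C" unfolding eventually_sequentially using xC by blast
  qed
  have FCxs: "FC xs = ereal (F xs)" using FC_def xsC by (simp add: ind_def)
  have FCx: "FC (x k) = ereal (F (x k))" if "k \<ge> 1" for k using FC_def xC[OF that] by (simp add: ind_def)
  have Fl: "(\<lambda>k. F (x k)) \<longlonglongrightarrow> F xs" by (rule F_cont[OF xl])
  have Fge: "F xs \<le> F (x k)" if k: "k \<ge> 1" for k
    by (rule LIMSEQ_le_const2[OF Fl]) (use Fmono k in blast)
  have "\<forall>\<^sub>F k in sequentially. dist (x k) xs < \<Lambda>" using tendstoD[OF xl Lam] .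
  moreover have "\<forall>\<^sub>F k in sequentially. dist (F (x k)) (F xs) < \<eta>" using tendstoD[OF Fl eta0] .
  moreover have "\<forall>\<^sub>F k in sequentially. K + 2 \<le> k" by (rule eventually_ge_at_top)
  ultimately have "\<forall>\<^sub>F k in sequentially. dist (x k) xs < \<Lambda> \<and> dist (F (x k)) (F xs) < \<eta> \<and> K + 2 \<le> k"
    by eventually_elim auto
  then obtain K' where K': "\<forall>k\<ge>K'. dist (x k) xs < \<Lambda> \<and> dist (F (x k)) (F xs) < \<eta> \<and> K + 2 \<le> k"
    unfolding eventually_sequentially by blast
  have KK: "K' > K + 1" using K' by fastforce
  have P1: "\<forall>k\<ge>K'. x k \<in> cball xs \<Lambda> \<and> \<bar>FC (x k) - ereal (F xs)\<bar> < ereal \<eta>"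
  proof (intro allI impI conjI)
    fix k assume k: "k \<ge> K'"
    then have k1: "k \<ge> 1" using KK by simp
    show "x k \<in> cball xs \<Lambda>" using K' k by (simp add: dist_commute less_imp_le)
    show "\<bar>FC (x k) - ereal (F xs)\<bar> < ereal \<eta>" using K' k FCx[OF k1] by (simp add: dist_real_def)
  qed
  define rr where "rr k = F (x k) - F xs" for k
  define T where "T = (\<lambda>k. (c * (L * \<alpha> k + \<eta>u))\<^sup>2 / (\<upsilon> * (1 - t)\<^sup>2 * (\<alpha> k)\<^sup>2))"
  define gam where "gam = (SUP k\<in>{1..}. T k)"
  have Tle: "\<forall>k\<ge>1. T k \<le> gam" and g0: "gam > 0"
    using gamma_facts[OF c0 t0 t1] unfolding T_def gam_def by auto
  have nn: "\<forall>k\<ge>K'. 0 \<le> rr k" using Fge KK unfolding rr_def by auto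
  have eu: "\<eta>u > 0" using eta_pos eta_le by simp
  have step: "\<forall>k\<ge>K'. (1/gam) * rr (Suc k) powr (2*t) \<le> rr k - rr (Suc k)"
  proof (intro allI impI)
    fix k assume k: "k \<ge> K'"
    have k1: "k \<ge> 1" and kK: "k \<ge> K + 2" using K' k KK by auto
    show "(1/gam) * rr (Suc k) powr (2*t) \<le> rr k - rr (Suc k)"
    proof (cases "rr (Suc k) = 0")
      case True then show ?thesis using nn k by simp
    next
      case False
      define s where "s = rr (Suc k)"
      have "0 \<le> s" using nn k unfolding s_def by simp
      then have s0: "s > 0" using False unfolding s_def by simp
      define u where "u = x (Suc k)"
      define n where "n = norm (u - x k)"
      have uC: "u \<in> C" using xC unfolding u_def by simp
      have wn: "\<forall>z\<in>C. (- r k) \<bullet> (z - u) \<le> 0"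
      proof
        fix z assume z: "z \<in> C"
        have "z \<in> C \<inter> S k" using z S_def kK k1 by simp
        then show "(- r k) \<bullet> (z - u) \<le> 0" using opt[OF k1] unfolding u_def by (simp add: inner_minus_left)
      qed
      define vv where "vv = cadj A *v (A *v u - y) + gf u + - r k"
      have vvin: "vv \<in> lsubdiff FC u" unfolding vv_def by (rule lsub_FC[OF uC wn])
      have vveq: "vv = (gf u - gf (x k)) - (1 / \<alpha> k) *\<^sub>R (B k *v (u - x k))"
        unfolding vv_def using r_def k1 unfolding u_def by (simp add: algebra_simps)
      have a: "\<alpha> k > 0" using alpha_pos[OF k1] .
      have nv: "norm vv \<le> (L + \<eta>u / \<alpha> k) * n"
      proof -
        have "norm vv \<le> norm (gf u - gf (x k)) + norm ((1 / \<alpha> k) *\<^sub>R (B k *v (u - x k)))"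
          unfolding vveq by (rule norm_triangle_ineq4)
        also have "\<dots> \<le> L * n + (1 / \<alpha> k) * (\<eta>u * n)"
        proof (rule add_mono)
          show "norm (gf u - gf (x k)) \<le> L * n" using gf_lip unfolding n_def by blast
          have "norm ((1 / \<alpha> k) *\<^sub>R (B k *v (u - x k))) = (1 / \<alpha> k) * norm (B k *v (u - x k))"
            using a by simp
          also have "\<dots> \<le> (1 / \<alpha> k) * (\<eta>u * n)"
            using normB[OF k1, of "u - x k"] a unfolding n_def by (intro mult_left_mono) auto
          finally show "norm ((1 / \<alpha> k) *\<^sub>R (B k *v (u - x k))) \<le> (1 / \<alpha> k) * (\<eta>u * n)" .
        qed
        also have "\<dots> = (L + \<eta>u / \<alpha> k) * n" by (simp add: algebra_simps)
        finally show ?thesis .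
      qed
      have uU: "u \<in> U" using P1 cb k unfolding u_def by auto
      have dst: "\<bar>F u - F xs\<bar> < \<eta>" using K' k unfolding u_def by (simp add: dist_real_def)
      have sdef: "F u - F xs = s" unfolding s_def rr_def u_def by simp
      have Fdiff: "\<bar>FC u - FC xs\<bar> = ereal s" using FCx[of "Suc k"] FCxs s0 sdef unfolding u_def by simp
      have "0 < \<bar>FC u - FC xs\<bar> \<and> \<bar>FC u - FC xs\<bar> < ereal \<eta>" using Fdiff s0 dst sdef by simp
      then have klu: "1 \<le> c * (1 - t) * s powr (- t) * norm vv"
        using kl uU vvin Fdiff by auto
      have dd: "\<upsilon> * n\<^sup>2 \<le> rr k - s" using decrease[OF k1] unfolding rr_def s_def n_def u_def by simp
      have Tk: "(c * (L * \<alpha> k + \<eta>u))\<^sup>2 / (\<upsilon> * (1 - t)\<^sup>2 * (\<alpha> k)\<^sup>2) \<le> gam"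
        using Tle k1 unfolding T_def by simp
      have "s powr (2*t) \<le> gam * (rr k - s)"
        by (rule key_arith[OF s0 _ c0 t0 t1 a ups_pos L_pos eu klu nv dd Tk]) (simp add: n_def)
      then show ?thesis using g0 unfolding s_def by (simp add: field_simps)
    qed
  qed
  have gdef: "(SUP k\<in>{1..}. (c * (L * \<alpha> k + \<eta>u))\<^sup>2 / (\<upsilon> * (1 - t)\<^sup>2 * (\<alpha> k)\<^sup>2)) = gam"
    unfolding gam_def T_def by simp
  have lim0: "rr \<longlonglongrightarrow> 0"
  proof -
    have "(\<lambda>k. F (x k) - F xs) \<longlonglongrightarrow> F xs - F xs" by (intro tendsto_diff Fl tendsto_const)
    then show ?thesis unfolding rr_def by simp
  qed
  have R0: "t = 0 \<longrightarrow> (\<forall>k\<ge>K'. rr (Suc k) \<le> max 0 (rr K' - (1 / gam) * real (k - K' + 1)))"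
  proof
    assume "t = 0"
    then show "\<forall>k\<ge>K'. rr (Suc k) \<le> max 0 (rr K' - (1 / gam) * real (k - K' + 1))"
      using rate0[OF g0 nn] step by simp
  qed
  have R1: "0 < t \<and> t \<le> 1/2 \<longrightarrow> (\<forall>k\<ge>K'. rr (Suc k)
       \<le> (1 - rr K' powr (2*t - 1) / (rr K' powr (2*t - 1) + gam)) ^ (k - K' + 1) * rr K')"
    using rate1[OF g0 _ _ nn step] by blast
  have R2: "1/2 < t \<and> t < 1 \<longrightarrow> (\<forall>\<sigma>. 0 < \<sigma> \<and> \<sigma> < 1 \<longrightarrow>
       (\<forall>\<^sub>F k in sequentially. rr (Suc k)
          \<le> (rr K' powr (1 - 2*t) + ((t - 1/2) * (1 - \<sigma>) powr (2*t) / gam) * real (k - K' + 1))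
               powr (1 / (1 - 2*t))))"
    using rate2[OF g0 _ _ nn step lim0] by blast
  show ?thesis
    unfolding Let_def gdef
    using KK P1 R0 R1 R2 unfolding rr_def by blast
qed

end

theorem theorem2:
  fixes A :: "complex ^ 'n ^ 'm" and y :: "complex ^ 'm"
    and f :: "complex ^ 'n \<Rightarrow> real" and gf :: "complex ^ 'n \<Rightarrow> complex ^ 'n"
    and L :: real and C :: "(complex ^ 'n) set" and K :: nat
    and \<alpha> :: "nat \<Rightarrow> real" and \<alpha>min \<alpha>max :: real
    and B :: "nat \<Rightarrow> complex ^ 'n ^ 'n" and \<eta>l \<eta>u :: real
    and V :: "nat \<Rightarrow> (complex ^ 'n) list" and x :: "nat \<Rightarrow> complex ^ 'n"
    and F :: "complex ^ 'n \<Rightarrow> real" and FC :: "complex ^ 'n \<Rightarrow> ereal"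
    and Fbar :: "nat \<Rightarrow> complex ^ 'n \<Rightarrow> real"
    and S :: "nat \<Rightarrow> (complex ^ 'n) set" and r :: "nat \<Rightarrow> complex ^ 'n"
    and \<upsilon> :: real
  assumes Ahy: "cadj A *v y \<noteq> 0"
    and f_grad: "\<forall>z. (f has_derivative (\<lambda>h. gf z \<bullet> h)) (at z)"
    and f_bdd: "bdd_below (range f)"
    and L_pos: "L > 0"
    and gf_lip: "\<forall>z1 z2. norm (gf z1 - gf z2) \<le> L * norm (z1 - z2)"
    and C_ne: "C \<noteq> {}" and C_closed: "closed C" and C_convex: "convex C"
    and F_def: "\<forall>z. F z = (1/2) * (norm (A *v z - y))\<^sup>2 + f z"
    and FC_def: "\<forall>z. FC z = ereal (F z) + ind C z"
    and K_pos: "K \<ge> 1"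
    and eta_pos: "0 < \<eta>l" and eta_le: "\<eta>l \<le> \<eta>u"
    and B_herm: "\<forall>k\<ge>1. hermitian (B k)"
    and B_bounds: "\<forall>k\<ge>1. \<forall>v. \<eta>l * (norm v)\<^sup>2 \<le> mnorm2 (B k) v \<and> mnorm2 (B k) v \<le> \<eta>u * (norm v)\<^sup>2"
    and alpha_bounds: "0 < \<alpha>min" "\<forall>k\<ge>1. \<alpha>min \<le> \<alpha> k \<and> \<alpha> k \<le> \<alpha>max"
      "\<alpha>max < 2 * \<eta>l / (\<eta>l + L)"
    and upsilon_def: "\<upsilon> = \<eta>l / \<alpha>max - (\<eta>l + L) / 2"
    and V1: "V 1 = [(1 / norm (cadj A *v y)) *\<^sub>R (cadj A *v y)]"
    and x1: "x 1 \<in> C \<inter> colspace (V 1)"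
    and Fbar_def: "\<forall>k\<ge>1. \<forall>z. Fbar k z = (1/2) * (norm (A *v z - y))\<^sup>2 + gf (x k) \<bullet> z
                      + 1 / (2 * \<alpha> k) * mnorm2 (B k) (z - x k)"
    and S_def: "\<forall>k\<ge>1. S k = (if k \<le> K + 1 then colspace (V k) else UNIV)"
    and x_min: "\<forall>k\<ge>1. x (Suc k) \<in> C \<inter> S k \<and>
                  (\<forall>z\<in>C \<inter> S k. Fbar k (x (Suc k)) \<le> Fbar k z)"
    and r_def: "\<forall>k\<ge>1. r k = cadj A *v (A *v x (Suc k) - y) + gf (x k)
                   + (1 / \<alpha> k) *\<^sub>R (B k *v (x (Suc k) - x k))"
    and V_upd: "\<forall>k. 1 \<le> k \<and> k \<le> K \<longrightarrow>
                  V (Suc k) = (if projperp (V k) (r k) \<noteq> 0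
                               then V k @ [(1 / norm (projperp (V k) (r k))) *\<^sub>R projperp (V k) (r k)]
                               else V k)"
  shows "((\<lambda>k. norm (x (Suc k) - x k)) \<longlonglongrightarrow> 0) \<and>
         (\<forall>xh. (\<exists>\<sigma>::nat\<Rightarrow>nat. strict_mono \<sigma> \<and> (x \<circ> \<sigma>) \<longlonglongrightarrow> xh) \<longrightarrow>
               (\<exists>v\<in>lsubdiff (ind C) xh. cadj A *v (A *v xh - y) + gf xh + v = 0))
         \<and>
         (\<forall>xs c t \<eta> U \<Lambda>. x \<longlonglongrightarrow> xs \<and> c > 0 \<and> 0 \<le> t \<and> t < 1 \<and> \<Lambda> > 0 \<and>
             cball xs \<Lambda> \<subseteq> U \<and> KL_power_at FC xs c t \<eta> U \<longrightarrow>
           (\<exists>K'. K' > K + 1 \<and>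
              (\<forall>k\<ge>K'. x k \<in> cball xs \<Lambda> \<and> \<bar>FC (x k) - ereal (F xs)\<bar> < ereal \<eta>) \<and>
              (let FK = F (x K') - F xs;
                   \<gamma> = (SUP k\<in>{1..}. (c * (L * \<alpha> k + \<eta>u))\<^sup>2 / (\<upsilon> * (1 - t)\<^sup>2 * (\<alpha> k)\<^sup>2))
               in (t = 0 \<longrightarrow> (\<forall>k\<ge>K'. F (x (Suc k)) - F xs
                                 \<le> max 0 (FK - (1 / \<gamma>) * real (k - K' + 1)))) \<and>
                  (0 < t \<and> t \<le> 1/2 \<longrightarrow> (\<forall>k\<ge>K'. F (x (Suc k)) - F xs
                     \<le> (1 - FK powr (2*t - 1) / (FK powr (2*t - 1) + \<gamma>)) ^ (k - K' + 1) * FK)) \<and>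
                  (1/2 < t \<and> t < 1 \<longrightarrow> (\<forall>\<sigma>. 0 < \<sigma> \<and> \<sigma> < 1 \<longrightarrow>
                     (\<forall>\<^sub>F k in sequentially. F (x (Suc k)) - F xs
                        \<le> (FK powr (1 - 2*t) + ((t - 1/2) * (1 - \<sigma>) powr (2*t) / \<gamma>) * real (k - K' + 1))
                             powr (1 / (1 - 2*t))))))))"
proof -
  interpret g: gksm A y f gf L C K \<alpha> \<alpha>min \<alpha>max B \<eta>l \<eta>u V x F FC Fbar S r \<upsilon>
    by (rule gksm.intro) (rule assms)+
  show ?thesis
    apply (intro conjI allI impI)
      apply (rule g.diff_to_0)
     apply (elim exE conjE, rule g.cluster, assumption+)
    apply (elim conjE, rule g.part2, assumption+)
    done
qed

end
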